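(* Let $g\ge1$, $0<\epsilon<1$, $\delta\in(0,1)$, and suppose $\ell_{i,t}\in[0,1]$ for all $i=1,\ldots,N$ and $t=1,\ldots,n$. Suppose $\mathcal A$ satisfies the regret bound $(\ast)$ with respect to the expected losses $\bar\ell_t$, and Algorithm 2 is run with weight function $\{\hat w^{\mathcal L_1}_t\}$ and learning parameters with $\eta_{t+1}\le\eta_t$. Then for any $T\in\mathcal T_n$ and any $a$, with probability at least $1-\delta$, \[ \widehat L_n-L_n(T,a)\le L_{C(T),n}(C(T)+1)\rho_{\mathcal E}\!\left(\frac{n}{L_{C(T),n}(C(T)+1)}\right)+\sum_{t=1}^n\frac{\eta_t}{8}+\frac{r_n\!\left(L_{C(T),n}(C(T)+1)-1\right)}{\eta_n}+\sqrt{\frac n2\ln\frac1\delta}, \] where $r_n(C)=(C+\epsilon)\ln n+\ln(1+\epsilon)-C\ln\epsilon$, and $L_{C,n}=\left\lceil\frac{\log n}{\lfloor\log(g+1)\rfloor}\right\rceil+1$ if $C=0$, $L_{C,n}=\frac{\log\frac{n}{C+1}}{\lfloor\log(g+1)\rfloor}+2$ if $C\ge1$.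
   Context: $\log$ is base 2. Randomized prediction: in rounds $t=1,\ldots,n$, the decision maker picks a distribution $\boldsymbol p_t$ in the probability simplex $\Delta_N\subset\mathbb R^N$ and draws an action $I_t\in\{1,\ldots,N\}$ from $\boldsymbol p_t$ (conditionally on the past); the adversary assigns losses $\ell_{i,t}\in[0,1]$, possibly depending on the decision maker's past actions. $\widehat L_n=\sum_{t=1}^n\ell_{I_t,t}$, and the expected loss is $\bar\ell_t(\boldsymbol p)=\sum_{i=1}^Np_i\ell_{i,t}$. Base experts are $\mathcal E=\{1,\ldots,N\}$ (expert $i$ corresponds to the unit vector $e_i\in\Delta_N$). A base algorithm $\mathcal A$ chooses distributions in $\Delta_N$ and satisfies $(\ast)$: for every $n$ and every loss sequence, $\sum_{t=1}^n\bar\ell_t(\boldsymbol p_{\mathcal A,t})-\min_i\sum_{t=1}^n\ell_{i,t}\le\rho_{\mathcal E}(n)$, where $\rho_{\mathcal E}:[0,\infty)\to[0,\infty)$ is nondecreasing, concave, $\rho_{\mathcal E}(0)=0$. $\boldsymbol p_{\mathcal A,t}(t')$ is the distribution chosen at time $t$ by an instance of $\mathcal A$ started at time $t'$. Transition paths: $\mathcal T_t$ is the set of $T=(t_1,\ldots,t_C;t)$, $C\ge0$, $1<t_1<\cdots<t_C\le t$, $C(T)=C$, $t_0=1$, $t_{C+1}=t+1$; $\tau_t(T)$ the last switch point $\le t$ (or $1$); $T_{t-1}$ the truncation to time $t-1$ (obtained by dropping switch points $>t-1$). A meta expert $(T,a)$, $T\in\mathcal T_n$, $a=(i_0,\ldots,i_C)\in\{1,\ldots,N\}^{C+1}$,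 has loss $L_n(T,a)=\sum_{c=0}^C\sum_{t=t_c}^{t_{c+1}-1}\ell_{i_c,t}$. For $T\in\mathcal T_t$, $\bar L_t(\mathcal A,T)=\sum_{c=0}^C\sum_{s=t_c}^{t_{c+1}-1}\bar\ell_s(\boldsymbol p_{\mathcal A,s}(t_c))$. Weights: given switch probabilities $p(t|t')$, the Markov chain $U_1=1$, $\Pr(U_t=t\mid U_{t-1}=t')=p(t|t')=1-\Pr(U_t=t'\mid U_{t-1}=t')$ defines $w_t(T)$ as the probability of the realization jumping exactly at the switch points of $T$. For $w^{\mathcal L_1}$: $\pi(j)=j^{-(1+\epsilon)}$, $Z_t=\sum_{j=1}^t\pi(j)$, $Z_0=0$, $Z_\infty=\sum_{j\ge1}\pi(j)$, $p(t|t')=\pi(t-1)/(Z_\infty-Z_{t-2})$. Pruning with parameter $g$: for $s=o2^u$, $o$ odd, $h_t(s)=1$ if $s\le t<s+g2^u$ else $0$; $\hat p(t|t')=1-h_t(t')(1-p(t|t'))$; $\hat w^{\mathcal L_1}_t$ is the Markov weight function for $\hat p$. Algorithm 2 (inputs $\mathcal A$, $\{\hat w_t\}$, $\eta_t>0$): at each $t$, choose $T\in\mathcal T_t$ with probability $q_t(T)=\frac{\hat w_t(T)e^{-\eta_t\bar L_{t-1}(\mathcal A,T_{t-1})}}{\sum_{T'\in\mathcal T_t}\hat w_t(T')e^{-\eta_t\bar L_{t-1}(\mathcal A,T'_{t-1})}}$, set $\boldsymbol p_t=\boldsymbol p_{\mathcal A,t}(\tau_t(T))$, and draw $I_t\sim\boldsymbol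 p_t$. *)

theory Defs
  imports "HOL-Analysis.Analysis" "HOL-Computational_Algebra.Primes"
begin

(* Experts are 1..N; a distribution / loss vector is a function nat => real
   (only the values at 1..N matter). *)

definition is_distrib :: "nat \<Rightarrow> (nat \<Rightarrow> real) \<Rightarrow> bool" where
  "is_distrib N p \<longleftrightarrow> (\<forall>i\<in>{1..N}. 0 \<le> p i) \<and> (\<Sum>i=1..N. p i) = 1"

definition ebar :: "nat \<Rightarrow> (nat \<Rightarrow> real) \<Rightarrow> (nat \<Rightarrow> real) \<Rightarrow> real" where
  "ebar N p l = (\<Sum>i=1..N. p i * l i)"

definition valid_loss :: "nat \<Rightarrow> (nat \<Rightarrow> real) \<Rightarrow> bool" where
  "valid_loss N l \<longleftrightarrow> (\<forall>i\<in>{1..N}. 0 \<le> l i \<and> l i \<le> 1)"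

(* A base algorithm maps the list of loss vectors seen so far (since it was
   started) to a distribution.  p_{A,t}(t') = A [l_{t'}, ..., l_{t-1}]. *)
definition base_alg_ok ::
  "nat \<Rightarrow> ((nat \<Rightarrow> real) list \<Rightarrow> (nat \<Rightarrow> real)) \<Rightarrow> (real \<Rightarrow> real) \<Rightarrow> bool" where
  "base_alg_ok N A \<rho> \<longleftrightarrow>
     (\<forall>ls. (\<forall>l\<in>set ls. valid_loss N l) \<longrightarrow> is_distrib N (A ls)) \<and>
     (\<forall>n (L :: nat \<Rightarrow> nat \<Rightarrow> real). (\<forall>t\<in>{1..n}. valid_loss N (L t)) \<longrightarrow>
        (\<forall>i\<in>{1..N}. (\<Sum>t=1..n. ebar N (A (map L [1..<t])) (L t)) - (\<Sum>t=1..n. L t i)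
                        \<le> \<rho> (real n)))"

definition rho_ok :: "(real \<Rightarrow> real) \<Rightarrow> bool" where
  "rho_ok \<rho> \<longleftrightarrow> (\<forall>x\<ge>0. \<rho> x \<ge> 0) \<and> mono_on {0..} \<rho> \<and> concave_on {0..} \<rho> \<and> \<rho> 0 = 0"

(* Transition paths: T = (t_1,...,t_C; t) is represented by the set of switch
   points S \<subseteq> {2..t}. *)
definition paths :: "nat \<Rightarrow> nat set set" where
  "paths t = Pow {2..t}"

definition tau :: "nat \<Rightarrow> nat set \<Rightarrow> nat" where
  "tau t S = Max (insert 1 {s\<in>S. s \<le> t})"

definition trunc :: "nat \<Rightarrow> nat set \<Rightarrow> nat set" where
  "trunc t S = {s\<in>S. s \<le> t}"

(* t_c for T = (S; t):  t_0 = 1, t_1 < ... < t_C the elements of S, t_{C+1} = t+1 *)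
definition tpt :: "nat \<Rightarrow> nat set \<Rightarrow> nat \<Rightarrow> nat" where
  "tpt t S c = (if c = 0 then 1 else if c \<le> card S then sorted_list_of_set S ! (c - 1) else t + 1)"

(* L_n(T,a) for meta expert (T,a), a c = i_c *)
definition meta_loss :: "(nat \<Rightarrow> nat \<Rightarrow> real) \<Rightarrow> nat \<Rightarrow> nat set \<Rightarrow> (nat \<Rightarrow> nat) \<Rightarrow> real" where
  "meta_loss ll n S a = (\<Sum>c=0..card S. \<Sum>t\<in>{tpt n S c..<tpt n S (c+1)}. ll t (a c))"

definition Abar :: "nat \<Rightarrow> ((nat \<Rightarrow> real) list \<Rightarrow> (nat \<Rightarrow> real)) \<Rightarrow> (nat \<Rightarrow> nat \<Rightarrow> real)
                    \<Rightarrow> nat \<Rightarrow> nat set \<Rightarrow> real" where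
  "Abar N A ll t S = (\<Sum>c=0..card S. \<Sum>s\<in>{tpt t S c..<tpt t S (c+1)}.
                        ebar N (A (map ll [tpt t S c..<s])) (ll s))"

(* Markov weight function for switch probabilities p t t' = p(t|t') *)
definition markov_w :: "(nat \<Rightarrow> nat \<Rightarrow> real) \<Rightarrow> nat \<Rightarrow> nat set \<Rightarrow> real" where
  "markov_w p t S = (\<Prod>s\<in>{2..t}. (if s \<in> S then p s (tau (s - 1) S) else 1 - p s (tau (s - 1) S)))"

definition piL1 :: "real \<Rightarrow> nat \<Rightarrow> real" where
  "piL1 \<epsilon> j = real j powr (-(1 + \<epsilon>))"

definition ZL1 :: "real \<Rightarrow> nat \<Rightarrow> real" where
  "ZL1 \<epsilon> t = (\<Sum>j=1..t. piL1 \<epsilon> j)"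

definition ZL1_inf :: "real \<Rightarrow> real" where
  "ZL1_inf \<epsilon> = (\<Sum>j. piL1 \<epsilon> (Suc j))"

definition pL1 :: "real \<Rightarrow> nat \<Rightarrow> nat \<Rightarrow> real" where
  "pL1 \<epsilon> t t' = piL1 \<epsilon> (t - 1) / (ZL1_inf \<epsilon> - ZL1 \<epsilon> (t - 2))"

(* pruning: s = o * 2^u with o odd, u = multiplicity 2 s *)
definition hprune :: "nat \<Rightarrow> nat \<Rightarrow> nat \<Rightarrow> real" where
  "hprune g t s = (if s \<le> t \<and> t < s + g * 2 ^ multiplicity (2::nat) s then 1 else 0)"

definition phatL1 :: "nat \<Rightarrow> real \<Rightarrow> nat \<Rightarrow> nat \<Rightarrow> real" where
  "phatL1 g \<epsilon> t t' = 1 - hprune g t t' * (1 - pL1 \<epsilon> t t')"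

definition whatL1 :: "nat \<Rightarrow> real \<Rightarrow> nat \<Rightarrow> nat set \<Rightarrow> real" where
  "whatL1 g \<epsilon> = markov_w (phatL1 g \<epsilon>)"

definition qalg :: "nat \<Rightarrow> ((nat \<Rightarrow> real) list \<Rightarrow> (nat \<Rightarrow> real)) \<Rightarrow> (nat \<Rightarrow> nat set \<Rightarrow> real)
                   \<Rightarrow> (nat \<Rightarrow> real) \<Rightarrow> (nat \<Rightarrow> nat \<Rightarrow> real) \<Rightarrow> nat \<Rightarrow> nat set \<Rightarrow> real" where
  "qalg N A w \<eta> ll t S =
     w t S * exp (- \<eta> t * Abar N A ll (t - 1) (trunc (t - 1) S)) /
     (\<Sum>S'\<in>paths t. w t S' * exp (- \<eta> t * Abar N A ll (t - 1) (trunc (t - 1) S')))"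

definition palg :: "nat \<Rightarrow> ((nat \<Rightarrow> real) list \<Rightarrow> (nat \<Rightarrow> real)) \<Rightarrow> (nat \<Rightarrow> nat set \<Rightarrow> real)
                   \<Rightarrow> (nat \<Rightarrow> real) \<Rightarrow> (nat \<Rightarrow> nat \<Rightarrow> real) \<Rightarrow> nat \<Rightarrow> nat \<Rightarrow> real" where
  "palg N A w \<eta> ll t i = (\<Sum>S\<in>paths t. qalg N A w \<eta> ll t S * A (map ll [tau t S..<t]) i)"

(* Adaptive adversary: adv h is the loss vector at time length h + 1, given the
   past actions h = [I_1,...,I_{t-1}].  Realized losses along an action history: *)
definition loss_of :: "(nat list \<Rightarrow> nat \<Rightarrow> real) \<Rightarrow> nat list \<Rightarrow> nat \<Rightarrow> nat \<Rightarrow> real" where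
  "loss_of adv hs t = adv (take (t - 1) hs)"

definition Lhat :: "(nat list \<Rightarrow> nat \<Rightarrow> real) \<Rightarrow> nat \<Rightarrow> nat list \<Rightarrow> real" where
  "Lhat adv n hs = (\<Sum>t=1..n. loss_of adv hs t (hs ! (t - 1)))"

(* probability that the action sequence (I_1,...,I_n) satisfies E, when
   Algorithm 2 plays against adversary adv *)
definition alg_prob :: "nat \<Rightarrow> ((nat \<Rightarrow> real) list \<Rightarrow> (nat \<Rightarrow> real)) \<Rightarrow> (nat \<Rightarrow> nat set \<Rightarrow> real)
                   \<Rightarrow> (nat \<Rightarrow> real) \<Rightarrow> (nat list \<Rightarrow> nat \<Rightarrow> real) \<Rightarrow> nat \<Rightarrow> (nat list \<Rightarrow> bool) \<Rightarrow> real" where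
  "alg_prob N A w \<eta> adv n E =
     (\<Sum>hs\<in>{hs. length hs = n \<and> set hs \<subseteq> {1..N} \<and> E hs}.
        \<Prod>t=1..n. palg N A w \<eta> (loss_of adv hs) t (hs ! (t - 1)))"

definition r_n :: "real \<Rightarrow> nat \<Rightarrow> real \<Rightarrow> real" where
  "r_n \<epsilon> n C = (C + \<epsilon>) * ln (real n) + ln (1 + \<epsilon>) - C * ln \<epsilon>"

definition L_Cn :: "nat \<Rightarrow> nat \<Rightarrow> nat \<Rightarrow> real" where
  "L_Cn g C n = (if C = 0
      then real_of_int \<lceil>log 2 (real n) / real_of_int \<lfloor>log 2 (real g + 1)\<rfloor>\<rceil> + 1
      else log 2 (real n / (real C + 1)) / real_of_int \<lfloor>log 2 (real g + 1)\<rfloor> + 2)"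

end

theory Submission
  imports Defs "HOL-Probability.Hoeffding"
begin

lemma hoeff_aux2:
  fixes m lam :: real
  assumes "0 \<le> m" "m \<le> 1"
  shows "ln (1 + m * (exp lam - 1)) \<le> lam * m + lam\<^sup>2 / 8"
proof (cases "lam \<ge> 0")
  case True
  from Hoeffdings_lemma_aux[OF True assms(1)] show ?thesis by (simp add: algebra_simps)
next
  case False
  define h where "h = - lam"
  have h: "h \<ge> 0" using False h_def by simp
  have p: "1 - m \<ge> 0" using assms by simp
  have pos: "1 + (1 - m) * (exp h - 1) > 0"
  proof -
    have "exp h \<ge> 1" using h by simp
    then have "(1 - m) * (exp h - 1) \<ge> 0" using p by simp
    then show ?thesis by linarith
  qed
  have eq: "1 + m * (exp lam - 1) = exp lam * (1 + (1 - m) * (exp h - 1))"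
    unfolding h_def by (simp add: algebra_simps exp_minus field_simps)
  have "ln (1 + m * (exp lam - 1)) = lam + ln (1 + (1 - m) * (exp h - 1))"
    unfolding eq using pos by (simp add: ln_mult)
  also have "\<dots> \<le> lam + (h * (1 - m) + h\<^sup>2 / 8)"
    using Hoeffdings_lemma_aux[OF h p] by simp
  also have "\<dots> = lam * m + lam\<^sup>2 / 8" unfolding h_def by (simp add: algebra_simps power2_eq_square)
  finally show ?thesis .
qed

lemma hoeff_fin:
  fixes p x :: "'a \<Rightarrow> real" and lam :: real
  assumes "finite J" "\<And>j. j \<in> J \<Longrightarrow> p j \<ge> 0" "(\<Sum>j\<in>J. p j) = 1"
    "\<And>j. j \<in> J \<Longrightarrow> 0 \<le> x j \<and> x j \<le> 1"
  shows "(\<Sum>j\<in>J. p j * exp (lam * x j)) \<le> exp (lam * (\<Sum>j\<in>J. p j * x j) + lam\<^sup>2 / 8)"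
proof -
  define m where "m = (\<Sum>j\<in>J. p j * x j)"
  have m0: "0 \<le> m" unfolding m_def using assms by (auto intro!: sum_nonneg)
  have m1: "m \<le> 1" unfolding m_def
  proof -
    have "(\<Sum>j\<in>J. p j * x j) \<le> (\<Sum>j\<in>J. p j)"
      using assms by (intro sum_mono) (simp add: mult_left_le)
    then show "(\<Sum>j\<in>J. p j * x j) \<le> 1" using assms by simp
  qed
  have cv: "exp (lam * x j) \<le> (1 - x j) + x j * exp lam" if "j \<in> J" for j
  proof -
    have "exp ((1 - x j) *\<^sub>R 0 + x j *\<^sub>R lam) \<le> (1 - x j) * exp 0 + x j * exp lam"
      using convex_onD[OF exp_convex, of "x j" 0 lam] assms(4)[OF that] by simp
    then show ?thesis by (simp add: mult.commute)
  qed
  have "(\<Sum>j\<in>J. p j * exp (lam * x j)) \<le> (\<Sum>j\<in>J. p j * ((1 - x j) + x j * exp lam))"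
    using assms cv by (intro sum_mono mult_left_mono) auto
  also have "\<dots> = (\<Sum>j\<in>J. p j) - m + m * exp lam"
    unfolding m_def by (simp add: algebra_simps sum_subtractf sum_distrib_right sum_distrib_left sum.distrib)
  also have "\<dots> = 1 + m * (exp lam - 1)" using assms by (simp add: algebra_simps)
  also have "\<dots> = exp (ln (1 + m * (exp lam - 1)))"
  proof -
    have e: "1 + m * (exp lam - 1) = (1 - m) + m * exp lam" by (simp add: algebra_simps)
    have "(1 - m) + m * exp lam > 0"
    proof (cases "m = 0")
      case True then show ?thesis by simp
    next
      case False then have "m * exp lam > 0" using m0 by simp
      then show ?thesis using m1 by linarith
    qed
    then show ?thesis unfolding e by simp
  qed
  also have "\<dots> \<le> exp (lam * m + lam\<^sup>2 / 8)" using hoeff_aux2[OF m0 m1] by simp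
  finally show ?thesis unfolding m_def .
qed

lemma concave_sum_card:
  fixes f :: "real \<Rightarrow> real" and y :: "'a \<Rightarrow> real"
  assumes "concave_on {0..} f" "finite J" "J \<noteq> {}" "\<And>j. j \<in> J \<Longrightarrow> y j \<ge> 0"
  shows "(\<Sum>j\<in>J. f (y j)) \<le> card J * f ((\<Sum>j\<in>J. y j) / card J)"
proof -
  have c: "real (card J) > 0" using assms by (simp add: card_gt_0_iff)
  have "(\<Sum>j\<in>J. (1 / card J) * f (y j)) \<le> f (\<Sum>j\<in>J. (1 / card J) *\<^sub>R y j)"
    by (rule concave_on_sum[OF assms(2,3,1)]) (use assms c in auto)
  also have "(\<Sum>j\<in>J. (1 / card J) *\<^sub>R y j) = (\<Sum>j\<in>J. y j) / card J"
    by (simp add: sum_divide_distrib)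
  finally have "(\<Sum>j\<in>J. f (y j)) / card J \<le> f ((\<Sum>j\<in>J. y j) / card J)"
    by (simp add: sum_divide_distrib)
  then show ?thesis using c by (simp add: divide_le_eq mult.commute)
qed

lemma concave_powr: 
  assumes "0 < r" "r \<le> 1" shows "concave_on {0<..} (\<lambda>x::real. x powr r)"
proof (rule f''_le0_imp_concave[where f'="\<lambda>x. r * x powr (r - 1)" and f''="\<lambda>x. r * ((r - 1) * x powr (r - 2))"])
  show "convex {0::real<..}" by simp
  fix x :: real assume x: "x \<in> {0<..}"
  then show "((\<lambda>x. x powr r) has_real_derivative r * x powr (r - 1)) (at x)"
    by (auto intro!: derivative_eq_intros)
  have "((\<lambda>x. r * x powr (r - 1)) has_real_derivative r * ((r - 1) * x powr (r - 1 - 1))) (at x)"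
    using x by (auto intro!: derivative_eq_intros)
  then show "((\<lambda>x. r * x powr (r - 1)) has_real_derivative r * ((r - 1) * x powr (r - 2))) (at x)"
    by (simp add: algebra_simps)
  show "r * ((r - 1) * x powr (r - 2)) \<le> 0"
    using assms by (intro mult_nonneg_nonpos mult_nonpos_nonneg) auto
qed

lemma powr_jensen:
  fixes w y :: "'a \<Rightarrow> real"
  assumes "0 < r" "r \<le> 1" "finite J" "J \<noteq> {}" "\<And>j. j \<in> J \<Longrightarrow> w j \<ge> 0" "(\<Sum>j\<in>J. w j) = 1"
    "\<And>j. j \<in> J \<Longrightarrow> y j > 0"
  shows "(\<Sum>j\<in>J. w j * y j powr r) \<le> (\<Sum>j\<in>J. w j * y j) powr r"
  using concave_on_sum[OF assms(3,4) concave_powr[OF assms(1,2)] assms(6,5), of y] assms(7) by simp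

lemma rho_scale:
  fixes f :: "real \<Rightarrow> real"
  assumes "concave_on {0..} f" "f 0 = 0" "0 < K" "K \<le> X" "0 \<le> n"
  shows "K * f (n / K) \<le> X * f (n / X)"
proof -
  have X: "X > 0" using assms by simp
  have "(1 - K / X) * f 0 + (K / X) * f (n / K) \<le> f ((1 - K / X) *\<^sub>R 0 + (K / X) *\<^sub>R (n / K))"
    by (rule concave_onD[OF assms(1)]) (use assms X in auto)
  then have "(K / X) * f (n / K) \<le> f (n / X)" using assms X by simp
  then show ?thesis using X by (simp add: field_simps)
qed

definition cnt :: "nat set \<Rightarrow> nat \<Rightarrow> nat" where
  "cnt S s = card {x\<in>S. x \<le> s}"

definition nxt :: "nat set \<Rightarrow> nat \<Rightarrow> nat \<Rightarrow> nat" where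
  "nxt X n s = Min (insert (n+1) {x\<in>X. s < x})"

lemma sl_facts:
  assumes "finite S"
  shows "sorted_wrt (<) (sorted_list_of_set S) \<and> set (sorted_list_of_set S) = S
        \<and> length (sorted_list_of_set S) = card S"
  using sorted_list_of_set_unique[OF assms, of "sorted_list_of_set S"] by simp

lemma tpt_range:
  assumes "S \<subseteq> {2..t}" "1 \<le> c" "c \<le> card S"
  shows "tpt t S c \<in> S"
proof -
  have f: "finite S" using assms(1) finite_subset by blast
  have "sorted_list_of_set S ! (c - 1) \<in> set (sorted_list_of_set S)"
    using sl_facts[OF f] assms by (intro nth_mem) auto
  then show ?thesis using sl_facts[OF f] assms by (simp add: tpt_def)
qed

lemma tpt_strict:
  assumes "S \<subseteq> {2..t}" "1 \<le> t" "i < j" "j \<le> card S + 1"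
  shows "tpt t S i < tpt t S j"
proof -
  have f: "finite S" using assms(1) finite_subset by blast
  note sl = sl_facts[OF f]
  show ?thesis
  proof (cases "i = 0")
    case True
    then show ?thesis
    proof (cases "j \<le> card S")
      case True
      then have "tpt t S j \<in> S" using tpt_range[OF assms(1)] assms(3) \<open>i=0\<close> by simp
      then show ?thesis using assms(1,3) \<open>i = 0\<close> by (auto simp: tpt_def)
    next
      case False
      then show ?thesis using \<open>i=0\<close> assms by (simp add: tpt_def)
    qed
  next
    case False
    then have i1: "1 \<le> i" by simp
    have iS: "tpt t S i \<in> S" using tpt_range[OF assms(1) i1] assms by simp
    show ?thesis
    proof (cases "j \<le> card S")
      case True
      have "sorted_list_of_set S ! (i - 1) < sorted_list_of_set S ! (j - 1)"
        using sl True assms i1 by (intro sorted_wrt_nth_less[where P="(<)"]) auto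
      then show ?thesis using True assms i1 by (simp add: tpt_def)
    next
      case False
      then have "tpt t S j = t + 1" using assms by (simp add: tpt_def)
      then show ?thesis using iS assms(1) by auto
    qed
  qed
qed

lemma tpt_mono:
  assumes "S \<subseteq> {2..t}" "1 \<le> t" "i \<le> j" "j \<le> card S + 1"
  shows "tpt t S i \<le> tpt t S j"
  using tpt_strict[OF assms(1,2), of i j] assms by (cases "i = j") auto

lemma tpt_img:
  assumes "S \<subseteq> {2..t}"
  shows "S = tpt t S ` {1..card S}"
proof -
  have f: "finite S" using assms(1) finite_subset by blast
  note sl = sl_facts[OF f]
  show ?thesis
  proof
    show "tpt t S ` {1..card S} \<subseteq> S" using tpt_range[OF assms] by auto
    show "S \<subseteq> tpt t S ` {1..card S}"
    proof
      fix x assume "x \<in> S"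
      then obtain k where k: "k < card S" "sorted_list_of_set S ! k = x"
        using sl by (metis in_set_conv_nth)
      then have "tpt t S (k+1) = x" by (simp add: tpt_def)
      then show "x \<in> tpt t S ` {1..card S}" using k by force
    qed
  qed
qed

lemma cnt_tpt:
  assumes "S \<subseteq> {2..t}" "1 \<le> t" "c \<le> card S" "tpt t S c \<le> s" "s < tpt t S (c+1)"
  shows "{x\<in>S. x \<le> s} = tpt t S ` {1..c}" "cnt S s = c" "tau s S = tpt t S c"
proof -
  have f: "finite S" using assms(1) finite_subset by blast
  show e: "{x\<in>S. x \<le> s} = tpt t S ` {1..c}"
  proof
    show "{x \<in> S. x \<le> s} \<subseteq> tpt t S ` {1..c}"
    proof
      fix x assume x: "x \<in> {x \<in> S. x \<le> s}"
      then obtain c' where c': "c' \<in> {1..card S}" "x = tpt t S c'" using tpt_img[OF assms(1)] by blast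
      have "c' \<le> c"
      proof (rule ccontr)
        assume "\<not> c' \<le> c"
        then have "tpt t S (c+1) \<le> tpt t S c'" using tpt_mono[OF assms(1,2), of "c+1" c'] c' by auto
        then show False using x c' assms by auto
      qed
      then show "x \<in> tpt t S ` {1..c}" using c' by auto
    qed
    show "tpt t S ` {1..c} \<subseteq> {x \<in> S. x \<le> s}"
    proof
      fix x assume "x \<in> tpt t S ` {1..c}"
      then obtain c' where c': "c' \<in> {1..c}" "x = tpt t S c'" by blast
      have "x \<in> S" using tpt_range[OF assms(1)] c' assms by auto
      moreover have "x \<le> s" using tpt_mono[OF assms(1,2), of c' c] c' assms by auto
      ultimately show "x \<in> {x \<in> S. x \<le> s}" by simp
    qed
  qed
  have inj: "inj_on (tpt t S) {1..c}"
    by (rule inj_onI) (metis assms(1,2,3) atLeastAtMost_iff le_trans linorder_neqE_nat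
        tpt_strict less_irrefl trans_le_add1)
  show "cnt S s = c" unfolding cnt_def e using card_image[OF inj] by simp
  show "tau s S = tpt t S c"
  proof (cases "c = 0")
    case True
    then show ?thesis unfolding tau_def e by (simp add: tpt_def)
  next
    case False
    show ?thesis unfolding tau_def e
    proof (rule Max_eqI)
      show "finite (insert 1 (tpt t S ` {1..c}))" by simp
      show "tpt t S c \<in> insert 1 (tpt t S ` {1..c})" using False by auto
      fix y assume y: "y \<in> insert 1 (tpt t S ` {1..c})"
      have t0: "tpt t S 0 = 1" by (simp add: tpt_def)
      show "y \<le> tpt t S c"
      proof (cases "y = 1")
        case True then show ?thesis using tpt_mono[OF assms(1,2), of 0 c] assms t0 by simp
      next
        case False
        then obtain c' where "c' \<in> {1..c}" "y = tpt t S c'" using y by auto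
        then show ?thesis using tpt_mono[OF assms(1,2), of c' c] assms by simp
      qed
    qed
  qed
qed

lemma sum_partition_mono:
  fixes f :: "nat \<Rightarrow> nat"
  assumes "\<And>c. c \<le> K \<Longrightarrow> f c \<le> f (Suc c)"
  shows "(\<Sum>c=0..K. \<Sum>s\<in>{f c..<f (Suc c)}. G s) = (\<Sum>s\<in>{f 0..<f (Suc K)}. G s)"
  using assms
proof (induction K)
  case 0 then show ?case by simp
next
  case (Suc K)
  have m: "f 0 \<le> f (Suc K)"
  proof -
    have "\<forall>c\<le>Suc K. f 0 \<le> f c"
    proof (intro allI impI)
      fix c assume "c \<le> Suc K" then show "f 0 \<le> f c"
        using Suc.prems by (induction c) (auto intro: le_trans)
    qed
    then show ?thesis by simp
  qed
  have "(\<Sum>c=0..Suc K. \<Sum>s\<in>{f c..<f (Suc c)}. G s)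
        = (\<Sum>s\<in>{f 0..<f (Suc K)}. G s) + (\<Sum>s\<in>{f (Suc K)..<f (Suc (Suc K))}. G s)"
    using Suc by simp
  also have "\<dots> = (\<Sum>s\<in>{f 0..<f (Suc (Suc K))}. G s)"
    by (rule sum.atLeastLessThan_concat) (use m Suc.prems in auto)
  finally show ?case .
qed

lemma sum_tpt:
  assumes "S \<subseteq> {2..t}"
  shows "(\<Sum>c=0..card S. \<Sum>s\<in>{tpt t S c..<tpt t S (c+1)}. F c s) = (\<Sum>s=1..t. F (cnt S s) s)"
proof (cases "t = 0")
  case True
  then have "S = {}" using assms by auto
  then show ?thesis using True by (simp add: tpt_def)
next
  case False
  then have t1: "1 \<le> t" by simp
  have "(\<Sum>c=0..card S. \<Sum>s\<in>{tpt t S c..<tpt t S (c+1)}. F c s)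
      = (\<Sum>c=0..card S. \<Sum>s\<in>{tpt t S c..<tpt t S (c+1)}. F (cnt S s) s)"
  proof (rule sum.cong[OF refl], rule sum.cong[OF refl])
    fix c s assume "c \<in> {0..card S}" "s \<in> {tpt t S c..<tpt t S (c+1)}"
    then show "F c s = F (cnt S s) s" using cnt_tpt(2)[OF assms t1, of c s] by simp
  qed
  also have "\<dots> = (\<Sum>s\<in>{tpt t S 0..<tpt t S (Suc (card S))}. F (cnt S s) s)"
    using sum_partition_mono[of "card S" "tpt t S" "\<lambda>s. F (cnt S s) s"] tpt_mono[OF assms t1] by simp
  also have "{tpt t S 0..<tpt t S (Suc (card S))} = {1..t}" by (auto simp: tpt_def)
  finally show ?thesis .
qed

lemma Abar_eq:
  assumes "S \<subseteq> {2..t}"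
  shows "Abar N A ll t S = (\<Sum>s=1..t. ebar N (A (map ll [tau s S..<s])) (ll s))"
proof (cases "t = 0")
  case True
  then have "S = {}" using assms by auto
  then show ?thesis using True by (simp add: Abar_def tpt_def)
next
  case False
  then have t1: "1 \<le> t" by simp
  have "Abar N A ll t S = (\<Sum>s=1..t. ebar N (A (map ll [tpt t S (cnt S s)..<s])) (ll s))"
    unfolding Abar_def by (rule sum_tpt[OF assms])
  also have "\<dots> = (\<Sum>s=1..t. ebar N (A (map ll [tau s S..<s])) (ll s))"
  proof (rule sum.cong[OF refl])
    fix s assume s: "s \<in> {1..t}"
    have "\<exists>c\<le>card S. tpt t S c \<le> s \<and> s < tpt t S (c+1)"
    proof -
      have ex: "\<exists>c. c \<le> card S \<and> s < tpt t S (c+1)"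
        using s by (intro exI[of _ "card S"]) (simp add: tpt_def)
      define c0 where "c0 = (LEAST c. c \<le> card S \<and> s < tpt t S (c+1))"
      have c0: "c0 \<le> card S" "s < tpt t S (c0+1)"
        using LeastI_ex[OF ex] unfolding c0_def by auto
      have "tpt t S c0 \<le> s"
      proof (cases "c0 = 0")
        case True then show ?thesis using s by (simp add: tpt_def)
      next
        case False
        then have "\<not> (c0 - 1 \<le> card S \<and> s < tpt t S (c0 - 1 + 1))"
          using not_less_Least[of "c0 - 1" "\<lambda>c. c \<le> card S \<and> s < tpt t S (c+1)"] unfolding c0_def[symmetric]
          by simp
        moreover have "c0 - 1 \<le> card S" using c0 by simp
        moreover have "c0 - 1 + 1 = c0" using False by simp
        ultimately show ?thesis by (simp add: not_less)
      qed
      then show ?thesis using c0 by blast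
    qed
    then obtain c where c: "c \<le> card S" "tpt t S c \<le> s" "s < tpt t S (c+1)" by blast
    show "ebar N (A (map ll [tpt t S (cnt S s)..<s])) (ll s) = ebar N (A (map ll [tau s S..<s])) (ll s)"
      using cnt_tpt(2,3)[OF assms t1 c] by simp
  qed
  finally show ?thesis .
qed

lemma meta_loss_eq:
  assumes "S \<subseteq> {2..n}"
  shows "meta_loss ll n S a = (\<Sum>t=1..n. ll t (a (cnt S t)))"
  unfolding meta_loss_def by (rule sum_tpt[OF assms])

lemma tau_props:
  assumes "finite X"
  shows "tau t X \<in> insert 1 X" "1 \<le> tau t X" "1 \<le> t \<Longrightarrow> tau t X \<le> t"
    "\<And>x. x \<in> X \<Longrightarrow> x \<le> t \<Longrightarrow> x \<le> tau t X"
proof -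
  have f: "finite (insert 1 {s\<in>X. s \<le> t})" using assms by simp
  have m: "tau t X \<in> insert 1 {s\<in>X. s \<le> t}" unfolding tau_def by (rule Max_in[OF f]) simp
  then show "tau t X \<in> insert 1 X" by auto
  show "1 \<le> tau t X" unfolding tau_def by (rule Max_ge[OF f]) simp
  show "1 \<le> t \<Longrightarrow> tau t X \<le> t" using m by auto
  fix x assume "x \<in> X" "x \<le> t"
  then show "x \<le> tau t X" unfolding tau_def by (intro Max_ge[OF f]) auto
qed

lemma nxt_props:
  assumes "finite X"
  shows "nxt X n s \<in> insert (n+1) X" "\<And>x. x \<in> X \<Longrightarrow> s < x \<Longrightarrow> nxt X n s \<le> x"
    "nxt X n s \<le> n + 1" "s \<le> n \<Longrightarrow> s < nxt X n s"
proof -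
  have f: "finite (insert (n+1) {x\<in>X. s < x})" using assms by simp
  have m: "nxt X n s \<in> insert (n+1) {x\<in>X. s < x}" unfolding nxt_def by (rule Min_in[OF f]) simp
  then show "nxt X n s \<in> insert (n+1) X" by auto
  show "nxt X n s \<le> n + 1" unfolding nxt_def by (rule Min_le[OF f]) simp
  show "s \<le> n \<Longrightarrow> s < nxt X n s" using m by auto
  fix x assume "x \<in> X" "s < x"
  then show "nxt X n s \<le> x" unfolding nxt_def by (intro Min_le[OF f]) auto
qed

lemma seg_iff:
  assumes "X \<subseteq> {2..n}" "s \<in> insert 1 X" "1 \<le> t" "t \<le> n"
  shows "tau t X = s \<longleftrightarrow> s \<le> t \<and> t < nxt X n s"
proof -
  have f: "finite X" using assms(1) finite_subset by blast
  note tp = tau_props[OF f, where t=t] and np = nxt_props[OF f, where n=n and s=s]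
  show ?thesis
  proof
    assume e: "tau t X = s"
    have st: "s \<le> t" using tp(3) assms e by simp
    moreover have "t < nxt X n s"
    proof (rule ccontr)
      assume "\<not> t < nxt X n s"
      then have le: "nxt X n s \<le> t" by simp
      then have "nxt X n s \<in> X" using np(1) assms by auto
      moreover have "s < nxt X n s" using np(4) st assms by simp
      ultimately show False using tp(4)[of "nxt X n s"] le e by simp
    qed
    ultimately show "s \<le> t \<and> t < nxt X n s" by simp
  next
    assume a: "s \<le> t \<and> t < nxt X n s"
    have ge: "s \<le> tau t X" using assms(1,2) tp(2) tp(4) a by auto
    show "tau t X = s"
    proof (rule ccontr)
      assume "tau t X \<noteq> s"
      then have gt: "s < tau t X" using ge by simp
      then have "tau t X \<in> X" using tp(1) tp(2) assms(1,2) by auto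
      then have "nxt X n s \<le> tau t X" using np(2) gt by simp
      then show False using tp(3) assms a by simp
    qed
  qed
qed

lemma group_tau:
  assumes "X \<subseteq> {2..n}"
  shows "(\<Sum>t=1..n. G (tau t X) t) = (\<Sum>s\<in>insert 1 X. \<Sum>t\<in>{s..<nxt X n s}. G s t)"
proof -
  have f: "finite X" using assms finite_subset by blast
  have "(\<Sum>t=1..n. G (tau t X) t) = (\<Sum>s\<in>insert 1 X. \<Sum>t\<in>{x. x \<in> {1..n} \<and> tau x X = s}. G (tau t X) t)"
    by (rule sum.group[symmetric]) (use f tau_props[OF f] in auto)
  also have "\<dots> = (\<Sum>s\<in>insert 1 X. \<Sum>t\<in>{s..<nxt X n s}. G s t)"
  proof (rule sum.cong[OF refl])
    fix s assume s: "s \<in> insert 1 X"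
    have s1: "1 \<le> s" using s assms by auto
    have E: "{x. x \<in> {1..n} \<and> tau x X = s} = {s..<nxt X n s}"
    proof
      show "{x. x \<in> {1..n} \<and> tau x X = s} \<subseteq> {s..<nxt X n s}"
      proof
        fix x assume "x \<in> {x. x \<in> {1..n} \<and> tau x X = s}"
        then show "x \<in> {s..<nxt X n s}" using seg_iff[OF assms s, of x] by auto
      qed
      show "{s..<nxt X n s} \<subseteq> {x. x \<in> {1..n} \<and> tau x X = s}"
      proof
        fix x assume x: "x \<in> {s..<nxt X n s}"
        then have "x \<le> n" using nxt_props(3)[OF f, where n=n and s=s] by simp
        then show "x \<in> {x. x \<in> {1..n} \<and> tau x X = s}" using seg_iff[OF assms s] x s1 by auto
      qed
    qed
    have T: "\<forall>x\<in>{s..<nxt X n s}. tau x X = s" using E by blast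
    show "(\<Sum>t\<in>{x. x \<in> {1..n} \<and> tau x X = s}. G (tau t X) t) = (\<Sum>t\<in>{s..<nxt X n s}. G s t)"
      by (rule sum.cong[OF E]) (use T in simp)
  qed
  finally show ?thesis .
qed

lemma seg_cnt:
  assumes "S \<subseteq> X" "finite X" "s \<le> t" "t < nxt X n s"
  shows "cnt S t = cnt S s"
proof -
  have "{x\<in>S. x \<le> t} = {x\<in>S. x \<le> s}"
  proof (rule set_eqI, rule iffI)
    fix x assume x: "x \<in> {x\<in>S. x \<le> t}"
    show "x \<in> {x\<in>S. x \<le> s}"
    proof (rule ccontr)
      assume "x \<notin> {x\<in>S. x \<le> s}"
      then have "s < x" using x by auto
      then have "nxt X n s \<le> x" using nxt_props(2)[OF assms(2)] x assms(1) by auto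
      then show False using x assms by auto
    qed
  qed (use assms in auto)
  then show ?thesis unfolding cnt_def by simp
qed

lemma cnt_le: "finite S \<Longrightarrow> cnt S t \<le> card S"
  unfolding cnt_def by (intro card_mono) auto

definition tailL :: "real \<Rightarrow> nat \<Rightarrow> real" where
  "tailL \<epsilon> k = ZL1_inf \<epsilon> - ZL1 \<epsilon> k"

lemma tailL_step: "tailL \<epsilon> k = piL1 \<epsilon> (Suc k) + tailL \<epsilon> (Suc k)"
  unfolding tailL_def ZL1_def by simp

lemma pi_pos: "1 \<le> j \<Longrightarrow> piL1 \<epsilon> j > 0"
  unfolding piL1_def by simp

lemma pi_summable: "0 < \<epsilon> \<Longrightarrow> summable (\<lambda>j. piL1 \<epsilon> (j + k))"
proof -
  assume e: "0 < \<epsilon>"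
  have "summable (\<lambda>j. real j powr (-(1 + \<epsilon>)))" using summable_real_powr_iff e by simp
  then have "summable (piL1 \<epsilon>)" unfolding piL1_def by simp
  then show ?thesis using summable_iff_shift[of "piL1 \<epsilon>" k] by simp
qed

lemma ZL1_alt: "ZL1 \<epsilon> k = (\<Sum>j<k. piL1 \<epsilon> (j + 1))"
  by (induction k) (simp_all add: ZL1_def)

lemma tailL_sum:
  assumes "0 < \<epsilon>"
  shows "tailL \<epsilon> k = (\<Sum>j. piL1 \<epsilon> (j + k + 1))"
proof -
  have s: "summable (\<lambda>j. piL1 \<epsilon> (j + 1))" using pi_summable[OF assms] .
  have "ZL1_inf \<epsilon> = (\<Sum>j. piL1 \<epsilon> (j + 1))" unfolding ZL1_inf_def by simp
  also have "\<dots> = (\<Sum>j. piL1 \<epsilon> (j + k + 1)) + (\<Sum>j<k. piL1 \<epsilon> (j + 1))"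
    using suminf_split_initial_segment[OF s, of k] by (simp add: add.assoc)
  finally show ?thesis unfolding tailL_def ZL1_alt by simp
qed

lemma tailL_pos:
  assumes "0 < \<epsilon>" shows "tailL \<epsilon> k > 0"
proof -
  have s: "summable (\<lambda>j. piL1 \<epsilon> (j + k + 1))" using pi_summable[OF assms, of "k+1"] by (simp add: add.assoc)
  have "0 < (\<Sum>j. piL1 \<epsilon> (j + k + 1))"
    by (rule suminf_pos[OF s]) (simp add: pi_pos)
  then show ?thesis using tailL_sum[OF assms] by simp
qed

lemma mvt_powr:
  fixes x e :: real
  assumes "0 < x" "0 < e"
  shows "e * (x + 1) powr (-1 - e) \<le> x powr (-e) - (x + 1) powr (-e)"
    "x powr (-e) - (x + 1) powr (-e) \<le> e * x powr (-1 - e)"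
proof -
  have d: "\<forall>y. x \<le> y \<and> y \<le> x + 1 \<longrightarrow> ((\<lambda>y. y powr (-e)) has_real_derivative (-e) * y powr (-e - 1)) (at y)"
    using assms by (auto intro!: derivative_eq_intros)
  obtain z where z: "x < z" "z < x + 1" "(x + 1) powr (-e) - x powr (-e) = (x + 1 - x) * ((-e) * z powr (-e - 1))"
    using MVT2[of x "x+1" "\<lambda>y. y powr (-e)" "\<lambda>y. (-e) * y powr (-e - 1)"] d by auto
  have m: "-e - 1 = -1 - e" by simp
  have eq: "x powr (-e) - (x + 1) powr (-e) = e * z powr (-1 - e)" using z(3) unfolding m by (simp add: algebra_simps)
  have "z powr (-1 - e) \<ge> (x + 1) powr (-1 - e)"
    using z assms by (intro powr_mono2') auto
  then show "e * (x + 1) powr (-1 - e) \<le> x powr (-e) - (x + 1) powr (-e)"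
    unfolding eq using assms by simp
  have "z powr (-1 - e) \<le> x powr (-1 - e)"
    using z assms by (intro powr_mono2') auto
  then show "x powr (-e) - (x + 1) powr (-e) \<le> e * x powr (-1 - e)"
    unfolding eq using assms by simp
qed

lemma lim_powr_shift:
  assumes "0 < e"
  shows "(\<lambda>j. real (j + k) powr (-e) / e) \<longlonglongrightarrow> 0"
proof -
  have "filterlim (\<lambda>j. real (j + k)) at_top sequentially"
    by (rule filterlim_compose[OF filterlim_real_sequentially filterlim_add_const_nat_at_top])
  then have "(\<lambda>j. real (j + k) powr (-e)) \<longlonglongrightarrow> 0"
    using assms by (intro tendsto_neg_powr) auto
  then show ?thesis using tendsto_divide_zero by blast
qed

lemma tailL_upper:
  assumes "0 < \<epsilon>" "1 \<le> k"
  shows "tailL \<epsilon> k \<le> real k powr (-\<epsilon>) / \<epsilon>"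
proof -
  define f where "f j = real (j + k) powr (-\<epsilon>) / \<epsilon>" for j
  have t: "(\<lambda>j. f j - f (Suc j)) sums (f 0 - 0)"
    unfolding f_def by (rule telescope_sums'[OF lim_powr_shift[OF assms(1)]])
  have s: "summable (\<lambda>j. piL1 \<epsilon> (j + k + 1))" using pi_summable[OF assms(1), of "k+1"] by (simp add: add.assoc)
  have le: "piL1 \<epsilon> (j + k + 1) \<le> f j - f (Suc j)" for j
  proof -
    have x: "0 < real (j + k)" using assms by simp
    have "\<epsilon> * (real (j + k) + 1) powr (-1 - \<epsilon>) \<le> real (j + k) powr (-\<epsilon>) - (real (j + k) + 1) powr (-\<epsilon>)"
      by (rule mvt_powr(1)[OF x assms(1)])
    then show ?thesis using assms unfolding f_def piL1_def
      by (simp add: field_simps add_ac)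
  qed
  have "(\<Sum>j. piL1 \<epsilon> (j + k + 1)) \<le> (\<Sum>j. f j - f (Suc j))"
    by (rule suminf_le[OF le s sums_summable[OF t]])
  also have "\<dots> = f 0" using sums_unique[OF t] by simp
  finally show ?thesis using tailL_sum[OF assms(1)] unfolding f_def by simp
qed

lemma tailL_lower:
  assumes "0 < \<epsilon>"
  shows "real (k + 1) powr (-\<epsilon>) / \<epsilon> \<le> tailL \<epsilon> k"
proof -
  define f where "f j = real (j + (k + 1)) powr (-\<epsilon>) / \<epsilon>" for j
  have t: "(\<lambda>j. f j - f (Suc j)) sums (f 0 - 0)"
    unfolding f_def by (rule telescope_sums'[OF lim_powr_shift[OF assms(1)]])
  have s: "summable (\<lambda>j. piL1 \<epsilon> (j + k + 1))" using pi_summable[OF assms(1), of "k+1"] by (simp add: add.assoc)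
  have le: "f j - f (Suc j) \<le> piL1 \<epsilon> (j + k + 1)" for j
  proof -
    have x: "0 < real (j + k + 1)" by simp
    have "real (j + k + 1) powr (-\<epsilon>) - (real (j + k + 1) + 1) powr (-\<epsilon>) \<le> \<epsilon> * real (j + k + 1) powr (-1 - \<epsilon>)"
      by (rule mvt_powr(2)[OF x assms(1)])
    then show ?thesis using assms unfolding f_def piL1_def
      by (simp add: field_simps add_ac)
  qed
  have "f 0 = (\<Sum>j. f j - f (Suc j))" using sums_unique[OF t] by simp
  also have "\<dots> \<le> (\<Sum>j. piL1 \<epsilon> (j + k + 1))"
    by (rule suminf_le[OF le sums_summable[OF t] s])
  finally show ?thesis using tailL_sum[OF assms(1)] unfolding f_def by simp
qed

lemma ZL1_inf_upper:
  assumes "0 < \<epsilon>" shows "ZL1_inf \<epsilon> \<le> (1 + \<epsilon>) / \<epsilon>"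
proof -
  have "ZL1_inf \<epsilon> = tailL \<epsilon> 0" unfolding tailL_def ZL1_def by simp
  also have "\<dots> = 1 + tailL \<epsilon> 1" using tailL_step[of \<epsilon> 0] by (simp add: piL1_def)
  also have "\<dots> \<le> 1 + 1 / \<epsilon>" using tailL_upper[OF assms, of 1] by simp
  finally show ?thesis using assms by (simp add: field_simps)
qed

lemma pL1_eq:
  assumes "2 \<le> s"
  shows "pL1 \<epsilon> s t' = piL1 \<epsilon> (s - 1) / tailL \<epsilon> (s - 2)"
  unfolding pL1_def tailL_def by simp

lemma tailL_step2:
  assumes "2 \<le> s"
  shows "tailL \<epsilon> (s - 2) = piL1 \<epsilon> (s - 1) + tailL \<epsilon> (s - 1)"
proof -
  have "Suc (s - 2) = s - 1" using assms by simp
  then show ?thesis using tailL_step[of \<epsilon> "s - 2"] by simp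
qed

lemma pL1_bounds:
  assumes "0 < \<epsilon>" "2 \<le> s"
  shows "0 < pL1 \<epsilon> s t'" "pL1 \<epsilon> s t' < 1"
    "1 - pL1 \<epsilon> s t' = tailL \<epsilon> (s - 1) / tailL \<epsilon> (s - 2)"
proof -
  have p: "piL1 \<epsilon> (s - 1) > 0" using pi_pos assms by simp
  have t1: "tailL \<epsilon> (s - 1) > 0" using tailL_pos[OF assms(1)] by simp
  have t2: "tailL \<epsilon> (s - 2) = piL1 \<epsilon> (s - 1) + tailL \<epsilon> (s - 1)" using tailL_step2[OF assms(2)] .
  show "0 < pL1 \<epsilon> s t'" unfolding pL1_eq[OF assms(2)] t2 using p t1 by simp
  show "pL1 \<epsilon> s t' < 1" unfolding pL1_eq[OF assms(2)] t2 using p t1 by simp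
  show "1 - pL1 \<epsilon> s t' = tailL \<epsilon> (s - 1) / tailL \<epsilon> (s - 2)"
    unfolding pL1_eq[OF assms(2)] t2 using p t1 by (simp add: field_simps)
qed

lemma hprune_01: "hprune g t s = 0 \<or> hprune g t s = 1"
  unfolding hprune_def by simp

lemma phat_bounds:
  assumes "0 < \<epsilon>" "2 \<le> s"
  shows "pL1 \<epsilon> s t' \<le> phatL1 g \<epsilon> s t'" "phatL1 g \<epsilon> s t' \<le> 1" "0 \<le> phatL1 g \<epsilon> s t'"
  using pL1_bounds[OF assms, of t'] hprune_01[of g s t'] unfolding phatL1_def by auto

lemma tau_trunc: "u \<le> t \<Longrightarrow> tau u (trunc t S) = tau u S"
  unfolding tau_def trunc_def by (rule arg_cong[where f=Max]) auto

lemma markov_step: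
  assumes "1 \<le> t"
  shows "markov_w p (Suc t) S = markov_w p t (trunc t S) *
     (if Suc t \<in> S then p (Suc t) (tau t (trunc t S)) else 1 - p (Suc t) (tau t (trunc t S)))"
proof -
  have "markov_w p (Suc t) S = markov_w p t S *
     (if Suc t \<in> S then p (Suc t) (tau t S) else 1 - p (Suc t) (tau t S))"
    unfolding markov_w_def using assms by (simp add: prod.cl_ivl_Suc)
  moreover have "markov_w p t S = markov_w p t (trunc t S)"
    unfolding markov_w_def
  proof (rule prod.cong[OF refl])
    fix s assume s: "s \<in> {2..t}"
    then have "s \<in> S \<longleftrightarrow> s \<in> trunc t S" unfolding trunc_def by auto
    moreover have "tau (s - 1) (trunc t S) = tau (s - 1) S" using s by (intro tau_trunc) auto
    ultimately show "(if s \<in> S then p s (tau (s - 1) S) else 1 - p s (tau (s - 1) S)) =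
      (if s \<in> trunc t S then p s (tau (s - 1) (trunc t S)) else 1 - p s (tau (s - 1) (trunc t S)))"
      by simp
  qed
  ultimately show ?thesis using tau_trunc[of t t S] by simp
qed

lemma trunc_id: "S \<in> paths t \<Longrightarrow> trunc t S = S"
  unfolding trunc_def paths_def by auto

lemma markov_marginal:
  "(\<Sum>S\<in>paths (Suc t). markov_w p (Suc t) S * G (trunc t S)) = (\<Sum>S0\<in>paths t. markov_w p t S0 * G S0)"
proof (cases "t = 0")
  case True
  have "paths 1 = {{}}" "paths 0 = {{}}" by (auto simp: paths_def)
  then show ?thesis using True by (simp add: markov_w_def trunc_def)
next
  case False
  then have t1: "1 \<le> t" by simp
  have fin: "finite (paths (Suc t))" "finite (paths t)" by (auto simp: paths_def)
  have img: "trunc t ` paths (Suc t) \<subseteq> paths t" by (auto simp: paths_def trunc_def)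
  have "(\<Sum>S\<in>paths (Suc t). markov_w p (Suc t) S * G (trunc t S))
      = (\<Sum>S0\<in>paths t. \<Sum>S\<in>{S. S \<in> paths (Suc t) \<and> trunc t S = S0}. markov_w p (Suc t) S * G (trunc t S))"
    by (rule sum.group[OF fin img, symmetric])
  also have "\<dots> = (\<Sum>S0\<in>paths t. markov_w p t S0 * G S0)"
  proof (rule sum.cong[OF refl])
    fix S0 assume S0: "S0 \<in> paths t"
    have nin: "Suc t \<notin> S0" using S0 by (auto simp: paths_def)
    have fib: "{S. S \<in> paths (Suc t) \<and> trunc t S = S0} = {S0, insert (Suc t) S0}"
    proof
      show "{S. S \<in> paths (Suc t) \<and> trunc t S = S0} \<subseteq> {S0, insert (Suc t) S0}"
      proof
        fix S assume S: "S \<in> {S. S \<in> paths (Suc t) \<and> trunc t S = S0}"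
        then have "S \<subseteq> {2..Suc t}" "{s\<in>S. s \<le> t} = S0" by (auto simp: paths_def trunc_def)
        then have "S = S0 \<or> S = insert (Suc t) S0" by (auto simp: le_Suc_eq)
        then show "S \<in> {S0, insert (Suc t) S0}" by simp
      qed
      show "{S0, insert (Suc t) S0} \<subseteq> {S. S \<in> paths (Suc t) \<and> trunc t S = S0}"
        using S0 t1 by (auto simp: paths_def trunc_def)
    qed
    have tr1: "trunc t S0 = S0" using trunc_id[OF S0] .
    have tr2: "trunc t (insert (Suc t) S0) = S0" using S0 by (auto simp: trunc_def paths_def)
    have "(\<Sum>S\<in>{S0, insert (Suc t) S0}. markov_w p (Suc t) S * G (trunc t S))
        = markov_w p (Suc t) S0 * G S0 + markov_w p (Suc t) (insert (Suc t) S0) * G S0"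
    proof -
      have ne: "S0 \<notin> {insert (Suc t) S0}" using nin by auto
      show ?thesis using sum.insert[OF _ ne, of "\<lambda>S. markov_w p (Suc t) S * G (trunc t S)"] tr1 tr2 by simp
    qed
    also have "\<dots> = markov_w p t S0 * G S0"
    proof -
      have A: "markov_w p (Suc t) S0 + markov_w p (Suc t) (insert (Suc t) S0) = markov_w p t S0"
        using markov_step[OF t1, of p S0] markov_step[OF t1, of p "insert (Suc t) S0"] nin tr1 tr2
        by (simp add: algebra_simps)
      show ?thesis using A by (metis distrib_right)
    qed
    finally show "(\<Sum>S\<in>{S. S \<in> paths (Suc t) \<and> trunc t S = S0}. markov_w p (Suc t) S * G (trunc t S))
        = markov_w p t S0 * G S0" unfolding fib .
  qed
  finally show ?thesis .
qed

lemma markov_sum1: "(\<Sum>S\<in>paths t. markov_w p t S) = 1"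
proof (induction t)
  case 0
  have "paths 0 = {{}}" by (auto simp: paths_def)
  then show ?case by (simp add: markov_w_def)
next
  case (Suc t)
  then show ?case using markov_marginal[of p t "\<lambda>_. 1"] by simp
qed

lemma markov_nonneg:
  assumes "\<And>s t'. 2 \<le> s \<Longrightarrow> 0 \<le> p s t' \<and> p s t' \<le> 1"
  shows "0 \<le> markov_w p t S"
  unfolding markov_w_def using assms by (intro prod_nonneg) auto

lemma what_nonneg: "0 < \<epsilon> \<Longrightarrow> 0 \<le> whatL1 g \<epsilon> t S"
  unfolding whatL1_def by (rule markov_nonneg) (use phat_bounds in auto)

lemma pi_powr: "1 \<le> (x::real) \<Longrightarrow> x powr (-(1 + e)) = x powr (-e) / x"
proof -
  assume x: "1 \<le> x"
  have "-(1+e) = -e + (-1)" by simp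
  then have "x powr (-(1 + e)) = x powr (-e) * x powr (-1)" by (metis powr_add)
  also have "x powr (-1) = 1 / x" using x by (simp add: powr_neg_one)
  finally show ?thesis by simp
qed

lemma rho_lower:
  assumes "0 < \<epsilon>" "2 \<le> s" "s \<le> n"
  shows "\<epsilon> / n \<le> piL1 \<epsilon> (s - 1) / tailL \<epsilon> (s - 1)"
proof -
  define x where "x = real (s - 1)"
  have x1: "1 \<le> x" using assms unfolding x_def by simp
  have xn: "x \<le> n" using assms unfolding x_def by simp
  have tp: "tailL \<epsilon> (s - 1) > 0" using tailL_pos[OF assms(1)] .
  have tu: "tailL \<epsilon> (s - 1) \<le> x powr (-\<epsilon>) / \<epsilon>" using tailL_upper[OF assms(1), of "s - 1"] assms unfolding x_def by simp
  have pi: "piL1 \<epsilon> (s - 1) = x powr (-\<epsilon>) / x"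
    unfolding piL1_def x_def[symmetric] using pi_powr[OF x1] .
  have "\<epsilon> / x = (x powr (-\<epsilon>) / x) / (x powr (-\<epsilon>) / \<epsilon>)" using x1 assms by (simp add: field_simps)
  also have "\<dots> \<le> (x powr (-\<epsilon>) / x) / tailL \<epsilon> (s - 1)"
  proof (rule divide_left_mono[OF tu])
    show "0 \<le> x powr (-\<epsilon>) / x" using x1 by simp
    show "0 < x powr (-\<epsilon>) / \<epsilon> * tailL \<epsilon> (s - 1)" using tp x1 assms by simp
  qed
  finally have "\<epsilon> / x \<le> piL1 \<epsilon> (s - 1) / tailL \<epsilon> (s - 1)" unfolding pi .
  moreover have "\<epsilon> / n \<le> \<epsilon> / x" using xn x1 assms by (intro divide_left_mono) auto
  ultimately show ?thesis by linarith
qed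

lemma what_lower:
  assumes e: "0 < \<epsilon>" and n: "1 \<le> n" and T: "T \<subseteq> {2..n}"
    and h: "\<forall>s\<in>{2..n}. s \<notin> T \<longrightarrow> hprune g s (tau (s - 1) T) = 1"
  shows "whatL1 g \<epsilon> n T > 0" "ln (1 / whatL1 g \<epsilon> n T) \<le> r_n \<epsilon> n (card T)"
proof -
  define \<rho> where "\<rho> s = piL1 \<epsilon> (s - 1) / tailL \<epsilon> (s - 1)" for s
  define R where "R s = tailL \<epsilon> (s - 1) / tailL \<epsilon> (s - 2)" for s
  have tpos: "\<And>k. tailL \<epsilon> k > 0" using tailL_pos[OF e] .
  have Rpos: "R s > 0" for s unfolding R_def using tpos by simp
  have rpos: "\<rho> s > 0" if "2 \<le> s" for s unfolding \<rho>_def using tpos pi_pos that by simp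
  define F where "F s = (if s \<in> T then phatL1 g \<epsilon> s (tau (s - 1) T) else 1 - phatL1 g \<epsilon> s (tau (s - 1) T))" for s
  have wdef: "whatL1 g \<epsilon> n T = (\<Prod>s\<in>{2..n}. F s)" unfolding whatL1_def markov_w_def F_def by simp
  have low: "(if s \<in> T then \<rho> s else 1) * R s \<le> F s" if s: "s \<in> {2..n}" for s
  proof (cases "s \<in> T")
    case True
    have s2: "2 \<le> s" using s by simp
    have "\<rho> s * R s = pL1 \<epsilon> s (tau (s - 1) T)"
      unfolding \<rho>_def R_def pL1_eq[OF s2] using tpos[of "s - 1"] by (simp add: less_imp_neq[symmetric])
    then show ?thesis using True phat_bounds(1)[OF e s2] unfolding F_def by simp
  next
    case False
    have s2: "2 \<le> s" using s by simp
    have "F s = 1 - pL1 \<epsilon> s (tau (s - 1) T)"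
      using False h s unfolding F_def phatL1_def by simp
    then show ?thesis using False pL1_bounds(3)[OF e s2] unfolding R_def by simp
  qed
  have lnn: "0 \<le> (if s \<in> T then \<rho> s else 1) * R s" if "s \<in> {2..n}" for s
    using rpos Rpos that by (simp add: less_imp_le)
  have "(\<Prod>s\<in>{2..n}. (if s \<in> T then \<rho> s else 1) * R s) \<le> (\<Prod>s\<in>{2..n}. F s)"
    using lnn low by (intro prod_mono) auto
  moreover have "(\<Prod>s\<in>{2..n}. (if s \<in> T then \<rho> s else 1) * R s) = (\<Prod>s\<in>T. \<rho> s) * (\<Prod>s\<in>{2..n}. R s)"
  proof -
    have "(\<Prod>s\<in>{2..n}. (if s \<in> T then \<rho> s else 1)) = (\<Prod>s\<in>T. \<rho> s)"
    proof -
      have "(\<Prod>s\<in>{2..n}. (if s \<in> T then \<rho> s else 1)) = prod \<rho> ({2..n} \<inter> {s. s \<in> T}) * prod (\<lambda>_. 1) ({2..n} \<inter> - {s. s \<in> T})"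
        by (rule prod.If_cases) simp
      also have "{2..n} \<inter> {s. s \<in> T} = T" using T by auto
      finally show ?thesis by simp
    qed
    then show ?thesis by (simp add: prod.distrib)
  qed
  moreover have "(\<Prod>s\<in>{2..n}. R s) = tailL \<epsilon> (n - 1) / tailL \<epsilon> 0"
  proof -
    have ne: "\<And>i. i \<in> {1..n} \<Longrightarrow> tailL \<epsilon> (i - 1) \<noteq> 0" using tpos by (metis less_irrefl)
    have "(\<Prod>i = Suc 1..n. tailL \<epsilon> (i - 1) / tailL \<epsilon> (i - 1 - 1)) = tailL \<epsilon> (n - 1) / tailL \<epsilon> (1 - 1)"
      by (rule prod_telescope''[of 1 n "\<lambda>i. tailL \<epsilon> (i - 1)", OF n ne])
    moreover have "(\<Prod>i = Suc 1..n. tailL \<epsilon> (i - 1) / tailL \<epsilon> (i - 1 - 1)) = (\<Prod>s\<in>{2..n}. R s)"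
    proof -
      have e2: "Suc 1 = 2" by simp
      have e3: "\<And>i::nat. i - 1 - 1 = i - 2" by simp
      show ?thesis unfolding R_def e2 e3 ..
    qed
    ultimately show ?thesis by simp
  qed
  moreover have "(\<epsilon> / n) ^ card T \<le> (\<Prod>s\<in>T. \<rho> s)"
  proof -
    have "(\<Prod>s\<in>T. \<epsilon> / n) \<le> (\<Prod>s\<in>T. \<rho> s)"
      using T e n rho_lower unfolding \<rho>_def by (intro prod_mono) force
    then show ?thesis by simp
  qed
  moreover have "real n powr (-\<epsilon>) / (1 + \<epsilon>) \<le> tailL \<epsilon> (n - 1) / tailL \<epsilon> 0"
  proof -
    have a: "real n powr (-\<epsilon>) / \<epsilon> \<le> tailL \<epsilon> (n - 1)" using tailL_lower[OF e, of "n - 1"] n by simp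
    have b: "tailL \<epsilon> 0 \<le> (1 + \<epsilon>) / \<epsilon>" using ZL1_inf_upper[OF e] unfolding tailL_def ZL1_def by simp
    have "real n powr (-\<epsilon>) / (1 + \<epsilon>) = (real n powr (-\<epsilon>) / \<epsilon>) / ((1 + \<epsilon>) / \<epsilon>)" using e by (simp add: field_simps)
    also have "\<dots> \<le> tailL \<epsilon> (n - 1) / ((1 + \<epsilon>) / \<epsilon>)" using a e by (intro divide_right_mono) auto
    also have "\<dots> \<le> tailL \<epsilon> (n - 1) / tailL \<epsilon> 0"
    proof (rule divide_left_mono[OF b])
      show "0 \<le> tailL \<epsilon> (n - 1)" using tpos[of "n - 1"] by simp
      show "0 < (1 + \<epsilon>) / \<epsilon> * tailL \<epsilon> 0" using tpos[of 0] e by simp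
    qed
    finally show ?thesis .
  qed
  ultimately have B: "(\<epsilon> / n) ^ card T * (real n powr (-\<epsilon>) / (1 + \<epsilon>)) \<le> whatL1 g \<epsilon> n T"
  proof -
    assume a1: "(\<Prod>s\<in>{2..n}. (if s \<in> T then \<rho> s else 1) * R s) \<le> (\<Prod>s\<in>{2..n}. F s)"
      and a2: "(\<Prod>s\<in>{2..n}. (if s \<in> T then \<rho> s else 1) * R s) = (\<Prod>s\<in>T. \<rho> s) * (\<Prod>s\<in>{2..n}. R s)"
      and a3: "(\<Prod>s\<in>{2..n}. R s) = tailL \<epsilon> (n - 1) / tailL \<epsilon> 0"
      and a4: "(\<epsilon> / n) ^ card T \<le> (\<Prod>s\<in>T. \<rho> s)"
      and a5: "real n powr (-\<epsilon>) / (1 + \<epsilon>) \<le> tailL \<epsilon> (n - 1) / tailL \<epsilon> 0"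
    have "(\<epsilon> / n) ^ card T * (real n powr (-\<epsilon>) / (1 + \<epsilon>)) \<le> (\<Prod>s\<in>T. \<rho> s) * (tailL \<epsilon> (n - 1) / tailL \<epsilon> 0)"
      using a4 a5 e n by (intro mult_mono) (auto intro: order_trans[OF _ a4])
    then show ?thesis using a1 a2 a3 unfolding wdef by simp
  qed
  have Bpos: "0 < (\<epsilon> / n) ^ card T * (real n powr (-\<epsilon>) / (1 + \<epsilon>))" using e n by simp
  show "whatL1 g \<epsilon> n T > 0" using B Bpos by linarith
  have "ln (1 / whatL1 g \<epsilon> n T) = - ln (whatL1 g \<epsilon> n T)" using B Bpos by (simp add: ln_div)
  also have "\<dots> \<le> - ln ((\<epsilon> / n) ^ card T * (real n powr (-\<epsilon>) / (1 + \<epsilon>)))"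
    using B Bpos by simp
  also have "\<dots> = r_n \<epsilon> n (card T)"
    using e n by (simp add: r_n_def ln_mult ln_div ln_realpow ln_powr algebra_simps)
  finally show "ln (1 / whatL1 g \<epsilon> n T) \<le> r_n \<epsilon> n (card T)" .
qed

definition nm :: "nat \<Rightarrow> nat \<Rightarrow> nat" where
  "nm a j = (a div 2 ^ j + 1) * 2 ^ j"

definition Dset :: "nat \<Rightarrow> nat \<Rightarrow> nat \<Rightarrow> nat set" where
  "Dset k a b = {y. \<exists>i\<ge>1. y = nm a (multiplicity 2 a + i * k)} \<inter> {a<..<b}"

definition Tref :: "nat \<Rightarrow> nat \<Rightarrow> nat set \<Rightarrow> nat set" where
  "Tref k n S = S \<union> (\<Union>s\<in>insert 1 S. Dset k s (nxt S n s))"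

lemma dvd_mult_iff2: "(x::nat) \<noteq> 0 \<Longrightarrow> 2 ^ n dvd x \<longleftrightarrow> n \<le> multiplicity 2 x"
  by (rule power_dvd_iff_le_multiplicity) auto

lemma nm_gt: "a < nm a j"
proof -
  have "a = a div 2^j * 2^j + a mod 2^j" by (rule div_mult_mod_eq[symmetric])
  moreover have "a mod 2^j < 2^j" by simp
  moreover have "(a div 2^j + 1) * 2^j = a div 2^j * 2^j + 2^j" by (simp add: algebra_simps)
  ultimately show ?thesis unfolding nm_def by linarith
qed

lemma nm_dvd: "2 ^ j dvd nm a j" unfolding nm_def by simp

lemma nm_least:
  assumes "2 ^ j dvd x" "a < x" shows "nm a j \<le> x"
proof -
  obtain q where q: "x = q * 2 ^ j" using assms(1) by (metis dvd_def mult.commute)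
  have "a div 2^j < q"
  proof (rule ccontr)
    assume "\<not> a div 2 ^ j < q"
    then have "q * 2^j \<le> a div 2^j * 2^j" by simp
    also have "\<dots> \<le> a" by (simp add: div_times_less_eq_dividend)
    finally show False using assms q by simp
  qed
  then have "a div 2^j + 1 \<le> q" by simp
  from mult_le_mono1[OF this, of "2^j"] show ?thesis unfolding nm_def q .
qed

lemma nm_mono:
  assumes "j \<le> j'" shows "nm a j \<le> nm a j'"
proof (rule nm_least)
  show "2 ^ j dvd nm a j'" using nm_dvd[of j' a] assms by (meson dvd_trans le_imp_power_dvd)
  show "a < nm a j'" by (rule nm_gt)
qed

lemma nm_pos: "0 < nm a j" using nm_gt[of a j] by simp

lemma roundup:
  assumes "2 ^ j dvd (c::nat)"
  shows "\<exists>y. 2 ^ (j + k) dvd y \<and> c \<le> y \<and> y \<le> c + (2 ^ k - 1) * 2 ^ j"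
proof -
  obtain q where q: "c = q * 2 ^ j" using assms by (metis dvd_def mult.commute)
  define K where "K = (2::nat) ^ k"
  have K: "K \<ge> 1" unfolding K_def by simp
  define r where "r = (q + K - 1) div K"
  have r1: "q \<le> r * K"
  proof -
    have "q + K - 1 = r * K + (q + K - 1) mod K" unfolding r_def by simp
    moreover have "(q + K - 1) mod K < K" using K by simp
    ultimately show ?thesis using K by linarith
  qed
  have r2: "r * K \<le> q + K - 1" unfolding r_def by (simp add: div_times_less_eq_dividend)
  show ?thesis
  proof (intro exI conjI)
    show "2 ^ (j + k) dvd r * K * 2 ^ j" unfolding K_def by (simp add: power_add mult.commute)
    show "c \<le> r * K * 2 ^ j" unfolding q using r1 by simp
    have "r * K * 2 ^ j \<le> (q + K - 1) * 2 ^ j" using r2 by simp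
    also have "\<dots> = c + (2 ^ k - 1) * 2 ^ j" unfolding q K_def using K K_def by (simp add: algebra_simps)
    finally show "r * K * 2 ^ j \<le> c + (2 ^ k - 1) * 2 ^ j" .
  qed
qed

lemma nm_step:
  assumes "2 ^ j dvd c" "a < c"
  shows "nm a (j + k) \<le> c + (2 ^ k - 1) * 2 ^ j"
proof -
  obtain y where y: "2 ^ (j + k) dvd y" "c \<le> y" "y \<le> c + (2 ^ k - 1) * 2 ^ j"
    using roundup[OF assms(1), of k] by blast
  have "nm a (j + k) \<le> y" using nm_least[OF y(1)] y(2) assms(2) by simp
  then show ?thesis using y(3) by simp
qed

lemma nm_first:
  assumes "0 < a" "1 \<le> k"
  shows "nm a (multiplicity 2 a + k) \<le> a + (2 ^ k - 1) * 2 ^ multiplicity 2 a"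
proof -
  define u where "u = multiplicity 2 a"
  have d: "2 ^ u dvd a" using dvd_mult_iff2[of a u] assms unfolding u_def by simp
  obtain y where y: "2 ^ (u + k) dvd y" "a \<le> y" "y \<le> a + (2 ^ k - 1) * 2 ^ u"
    using roundup[OF d, of k] by blast
  have "y \<noteq> a"
  proof
    assume "y = a"
    then have "u + k \<le> u" using y(1) dvd_mult_iff2[of a "u + k"] assms unfolding u_def by simp
    then show False using assms by simp
  qed
  then have "a < y" using y by simp
  then have "nm a (u + k) \<le> y" using nm_least[OF y(1)] by simp
  then show ?thesis using y(3) unfolding u_def by simp
qed

lemma dvd_gap:
  assumes "2 ^ J dvd (y::nat)" "2 ^ J dvd z" "z < y"
  shows "z + 2 ^ J \<le> y"
proof -
  obtain q1 where q1: "y = q1 * 2 ^ J" using assms(1) by (metis dvd_def mult.commute)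
  obtain q2 where q2: "z = q2 * 2 ^ J" using assms(2) by (metis dvd_def mult.commute)
  have "q2 < q1" using assms(3) q1 q2 by simp
  then have "q2 * 2 ^ J + 2 ^ J \<le> q1 * 2 ^ J"
    by (metis Suc_leI mult_Suc mult_le_mono1 add.commute)
  then show ?thesis using q1 q2 by simp
qed

lemma Dset_sub: "Dset k a b \<subseteq> {a<..<b}" unfolding Dset_def by auto

lemma Tref_sub:
  assumes "S \<subseteq> {2..n}"
  shows "Tref k n S \<subseteq> {2..n}" "S \<subseteq> Tref k n S" "finite (Tref k n S)"
proof -
  have f: "finite S" using assms finite_subset by blast
  have "Dset k s (nxt S n s) \<subseteq> {2..n}" if "s \<in> insert 1 S" for s
  proof -
    have "1 \<le> s" using that assms by auto
    moreover have "nxt S n s \<le> n + 1" using nxt_props(3)[OF f] .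
    ultimately show ?thesis using Dset_sub[of k s "nxt S n s"] by auto
  qed
  then show "Tref k n S \<subseteq> {2..n}" unfolding Tref_def using assms by blast
  then show "finite (Tref k n S)" using finite_subset by blast
  show "S \<subseteq> Tref k n S" unfolding Tref_def by blast
qed

lemma Tref_loc:
  assumes S: "S \<subseteq> {2..n}" and t: "1 \<le> t" "t \<le> n"
    and x: "x \<in> Tref k n S" "x \<le> t"
  shows "x \<le> tau t S \<or> x \<in> Dset k (tau t S) (nxt S n (tau t S))"
proof -
  have f: "finite S" using S finite_subset by blast
  define a where "a = tau t S"
  have a: "a \<in> insert 1 S" unfolding a_def using tau_props(1)[OF f] .
  have seg: "a \<le> t \<and> t < nxt S n a" using seg_iff[OF S a t] unfolding a_def by simp
  have "x \<le> a \<or> x \<in> Dset k a (nxt S n a)"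
  proof (cases "x \<in> S")
    case True
    then show ?thesis using tau_props(4)[OF f True x(2)] unfolding a_def by simp
  next
    case False
    then obtain s where s: "s \<in> insert 1 S" "x \<in> Dset k s (nxt S n s)" using x(1) unfolding Tref_def by blast
    have xs: "s < x" "x < nxt S n s" using subsetD[OF Dset_sub s(2)] by auto
    have s1: "1 \<le> s" using s(1) S by auto
    consider "s = a" | "s < a" | "a < s" by linarith
    then show ?thesis
    proof cases
      case 1 then show ?thesis using s by simp
    next
      case 2
      then have "a \<in> S" using a s1 by auto
      then have "nxt S n s \<le> a" using nxt_props(2)[OF f] 2 by simp
      then show ?thesis using xs by simp
    next
      case 3
      then have "s \<in> S" using s(1) a S by auto
      then have "nxt S n a \<le> s" using nxt_props(2)[OF f] 3 by simp
      then show ?thesis using xs seg x(2) by simp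
    qed
  qed
  then show ?thesis unfolding a_def .
qed

lemma tau_notin: "t \<notin> T \<Longrightarrow> tau (t - 1) T = tau t T"
  unfolding tau_def by (rule arg_cong[where f=Max]) (auto simp: le_diff_conv2 le_eq_less_or_eq)

lemma no_forced:
  assumes S: "S \<subseteq> {2..n}" and k: "1 \<le> k" and g: "2 ^ k - 1 \<le> g"
    and t: "t \<in> {2..n}" "t \<notin> Tref k n S"
  shows "hprune g t (tau (t - 1) (Tref k n S)) = 1"
proof -
  define T where "T = Tref k n S"
  have f: "finite S" using S finite_subset by blast
  have fT: "finite T" using Tref_sub(3)[OF S] unfolding T_def .
  have ST: "S \<subseteq> T" using Tref_sub(2)[OF S] unfolding T_def .
  have tn: "t \<notin> T" using t unfolding T_def by simp
  have t1: "1 \<le> t" "t \<le> n" using t by auto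
  define a where "a = tau t S"
  define b where "b = nxt S n a"
  have a: "a \<in> insert 1 S" unfolding a_def using tau_props(1)[OF f] .
  have seg: "a \<le> t" "t < b" using seg_iff[OF S a t1] unfolding a_def b_def by auto
  have a0: "0 < a" using a S by auto
  have at: "a < t"
  proof -
    have "a \<noteq> t" using a t tn ST by auto
    then show ?thesis using seg by simp
  qed
  define u0 where "u0 = multiplicity 2 a"
  have loc: "\<And>x. x \<in> T \<Longrightarrow> x \<le> t \<Longrightarrow> x \<le> a \<or> x \<in> Dset k a b"
    using Tref_loc[OF S t1] unfolding T_def a_def b_def by blast
  have aT: "a \<in> insert 1 T" using a ST by auto
  have fin: "finite (insert 1 {s\<in>T. s \<le> t})" using fT by simp
  define P where "P i \<longleftrightarrow> 1 \<le> i \<and> nm a (u0 + i * k) \<le> t" for i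
  have gk: "(2 ^ k - 1) * 2 ^ j \<le> g * 2 ^ j" for j :: nat using g by simp
  have "\<exists>p. tau t T = p \<and> p \<le> t \<and> t < p + g * 2 ^ multiplicity 2 p"
  proof (cases "\<exists>i. P i")
    case False
    have "tau t T = a" unfolding tau_def
    proof (rule Max_eqI[OF fin])
      show "a \<in> insert 1 {s \<in> T. s \<le> t}" using aT seg by auto
      fix y assume y: "y \<in> insert 1 {s \<in> T. s \<le> t}"
      show "y \<le> a"
      proof (cases "y = 1")
        case True then show ?thesis using a0 by simp
      next
        case False
        then have yT: "y \<in> T" "y \<le> t" using y by auto
        show ?thesis
        proof (rule ccontr)
          assume "\<not> y \<le> a"
          then have "y \<in> Dset k a b" using loc[OF yT] by simp
          then obtain i where "i \<ge> 1" "y = nm a (u0 + i * k)" unfolding Dset_def u0_def by auto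
          then have "P i" using yT unfolding P_def by simp
          then show False using \<open>\<not> (\<exists>i. P i)\<close> by blast
        qed
      qed
    qed
    moreover have "t < a + g * 2 ^ u0"
    proof -
      have "\<not> P 1" using False by blast
      then have "t < nm a (u0 + k)" unfolding P_def by simp
      also have "\<dots> \<le> a + (2 ^ k - 1) * 2 ^ u0" using nm_first[OF a0 k] unfolding u0_def .
      also have "\<dots> \<le> a + g * 2 ^ u0" using gk by simp
      finally show ?thesis .
    qed
    ultimately show ?thesis using seg unfolding u0_def by blast
  next
    case True
    have bnd: "P i \<Longrightarrow> i \<le> t" for i
    proof -
      assume "P i"
      then have "nm a (u0 + i * k) \<le> t" unfolding P_def by simp
      moreover have "2 ^ (u0 + i * k) \<le> nm a (u0 + i * k)"
        using nm_dvd[of "u0 + i * k" a] nm_pos[of a "u0 + i * k"] by (simp add: dvd_imp_le)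
      moreover have "i \<le> 2 ^ (u0 + i * k)"
      proof -
        have "i < 2 ^ i" by (rule less_exp)
        also have "\<dots> \<le> 2 ^ (u0 + i * k)"
        proof (rule power_increasing)
          have h: "i \<le> i * k" using k by simp
          then show "i \<le> u0 + i * k" by linarith
        qed simp
        finally show ?thesis by simp
      qed
      ultimately show "i \<le> t" by linarith
    qed
    have finP: "finite {i. P i}"
    proof (rule finite_subset[of _ "{..t}"])
      show "{i. P i} \<subseteq> {..t}" using bnd by blast
    qed simp
    define istar where "istar = Max {i. P i}"
    have Pi: "P istar" unfolding istar_def using Max_in[OF finP] True by auto
    have imax: "P i \<Longrightarrow> i \<le> istar" for i unfolding istar_def using Max_ge[OF finP] by auto
    define x where "x = nm a (u0 + istar * k)"
    have xt: "x \<le> t" using Pi unfolding P_def x_def by simp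
    have ax: "a < x" unfolding x_def by (rule nm_gt)
    have xD: "x \<in> Dset k a b" unfolding Dset_def x_def u0_def using Pi xt seg ax unfolding P_def x_def u0_def by auto
    have xT: "x \<in> T"
    proof -
      have "Dset k a b \<subseteq> T" unfolding T_def Tref_def b_def using a by blast
      then show ?thesis using xD by blast
    qed
    have "tau t T = x" unfolding tau_def
    proof (rule Max_eqI[OF fin])
      show "x \<in> insert 1 {s \<in> T. s \<le> t}" using xT xt by auto
      fix y assume y: "y \<in> insert 1 {s \<in> T. s \<le> t}"
      show "y \<le> x"
      proof (cases "y = 1")
        case True then show ?thesis using ax by simp
      next
        case False
        then have yT: "y \<in> T" "y \<le> t" using y by auto
        show ?thesis
        proof (cases "y \<le> a")
          case True then show ?thesis using ax by simp
        next
          case False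
          then have "y \<in> Dset k a b" using loc[OF yT] by simp
          then obtain i where i: "i \<ge> 1" "y = nm a (u0 + i * k)" unfolding Dset_def u0_def by auto
          then have "P i" using yT unfolding P_def by simp
          then have "i \<le> istar" by (rule imax)
          then have "u0 + i * k \<le> u0 + istar * k" by simp
          then show ?thesis unfolding i(2) x_def by (rule nm_mono)
        qed
      qed
    qed
    moreover have "t < x + g * 2 ^ multiplicity 2 x"
    proof -
      have "\<not> P (istar + 1)" using imax by fastforce
      then have "t < nm a (u0 + istar * k + k)" unfolding P_def by (simp add: algebra_simps)
      also have "\<dots> \<le> x + (2 ^ k - 1) * 2 ^ (u0 + istar * k)"
        by (rule nm_step) (use nm_dvd ax in \<open>auto simp: x_def\<close>)
      also have "\<dots> \<le> x + g * 2 ^ (u0 + istar * k)" using gk by simp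
      also have "\<dots> \<le> x + g * 2 ^ multiplicity 2 x"
      proof -
        have "u0 + istar * k \<le> multiplicity 2 x"
          using dvd_mult_iff2[of x "u0 + istar * k"] nm_dvd nm_pos unfolding x_def by simp
        then show ?thesis by (simp add: power_increasing)
      qed
      finally show ?thesis .
    qed
    ultimately show ?thesis using xt by blast
  qed
  then obtain p where p: "tau t T = p" "p \<le> t" "t < p + g * 2 ^ multiplicity 2 p" by blast
  have "tau (t - 1) T = p" using tau_notin[OF tn] p by simp
  then show ?thesis unfolding T_def[symmetric] hprune_def using p by simp
qed

lemma concave_sum_card':
  fixes f :: "real \<Rightarrow> real" and y :: "'a \<Rightarrow> real"
  assumes "concave_on I f" "finite J" "J \<noteq> {}" "\<And>j. j \<in> J \<Longrightarrow> y j \<in> I"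
  shows "(\<Sum>j\<in>J. f (y j)) \<le> card J * f ((\<Sum>j\<in>J. y j) / card J)"
proof -
  have c: "real (card J) > 0" using assms by (simp add: card_gt_0_iff)
  have "(\<Sum>j\<in>J. (1 / card J) * f (y j)) \<le> f (\<Sum>j\<in>J. (1 / card J) *\<^sub>R y j)"
    by (rule concave_on_sum[OF assms(2,3,1)]) (use assms c in auto)
  also have "(\<Sum>j\<in>J. (1 / card J) *\<^sub>R y j) = (\<Sum>j\<in>J. y j) / card J"
    by (simp add: sum_divide_distrib)
  finally have "(\<Sum>j\<in>J. f (y j)) / card J \<le> f ((\<Sum>j\<in>J. y j) / card J)"
    by (simp add: sum_divide_distrib)
  then show ?thesis using c by (simp add: divide_le_eq mult.commute)
qed

lemma Dset_card:
  assumes k: "1 \<le> k" and a: "0 < a" "a < b"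
  shows "real (card (Dset k a b)) \<le> of_int \<lceil>log 2 (real (b - a)) / real k\<rceil>"
proof (cases "Dset k a b = {}")
  case True
  have "0 \<le> log 2 (real (b - a))" using a by simp
  then have "0 \<le> log 2 (real (b - a)) / real k" by simp
  then have "0 \<le> \<lceil>log 2 (real (b - a)) / real k\<rceil>" by simp
  then show ?thesis using True by simp
next
  case False
  define u0 where "u0 = multiplicity 2 a"
  define x where "x = log 2 (real (b - a)) / real k"
  define M where "M = nat \<lceil>x\<rceil>"
  have sub: "Dset k a b \<subseteq> (\<lambda>i. nm a (u0 + i * k)) ` {1..M}"
  proof
    fix y assume y: "y \<in> Dset k a b"
    have ya: "a < y" "y < b" using subsetD[OF Dset_sub y] by auto
    have ba2: "2 \<le> b - a" using ya by simp
    have ex: "\<exists>i. 1 \<le> i \<and> y = nm a (u0 + i * k)" using y unfolding Dset_def u0_def by auto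
    define i0 where "i0 = (LEAST i. 1 \<le> i \<and> y = nm a (u0 + i * k))"
    have i0: "1 \<le> i0" "y = nm a (u0 + i0 * k)" using LeastI_ex[OF ex] unfolding i0_def by auto
    have xpos: "1 / real k \<le> x"
    proof -
      have "1 \<le> log 2 (real (b - a))"
      proof -
        have "log 2 2 \<le> log 2 (real (b - a))" using ba2 by (subst log_le_cancel_iff) auto
        then show ?thesis by simp
      qed
      then show ?thesis unfolding x_def using k by (simp add: divide_right_mono)
    qed
    have "i0 \<le> M"
    proof (cases "i0 = 1")
      case True
      have "0 < x" using xpos k by (smt (verit) divide_pos_pos of_nat_0_less_iff le_numeral_extra(2) less_le_trans zero_less_one not_one_le_zero)
      then have "0 < \<lceil>x\<rceil>" by simp
      then show ?thesis unfolding M_def using True by linarith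
    next
      case False
      then have i2: "2 \<le> i0" using i0 by simp
      define J where "J = u0 + (i0 - 1) * k"
      define z where "z = nm a J"
      have "z \<noteq> y"
      proof
        assume "z = y"
        then have "1 \<le> i0 - 1 \<and> y = nm a (u0 + (i0 - 1) * k)" using i2 unfolding z_def J_def by simp
        then have "i0 \<le> i0 - 1" unfolding i0_def by (rule Least_le)
        then show False using i2 by simp
      qed
      moreover have "z \<le> y" unfolding z_def J_def i0(2) using i2 by (intro nm_mono) (simp add: mult_le_mono1)
      ultimately have zy: "z < y" by simp
      have dy: "2 ^ J dvd y"
      proof -
        have "J \<le> u0 + i0 * k" unfolding J_def by (simp add: mult_le_mono1)
        then show ?thesis using nm_dvd[of "u0 + i0 * k" a] i0(2) by (metis dvd_trans le_imp_power_dvd)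
      qed
      have gap: "z + 2 ^ J \<le> y" by (rule dvd_gap[OF dy _ zy]) (simp add: z_def nm_dvd)
      have "a < z" unfolding z_def by (rule nm_gt)
      then have "2 ^ J < b - a" using gap ya by linarith
      moreover have "2 ^ ((i0 - 1) * k) \<le> (2::nat) ^ J" unfolding J_def by (intro power_increasing) auto
      ultimately have lt: "2 ^ ((i0 - 1) * k) < b - a" by linarith
      have "real ((i0 - 1) * k) < log 2 (real (b - a))"
      proof -
        define m where "m = (i0 - 1) * k"
        have ba: "real (b - a) = real b - real a" using ya by (simp add: of_nat_diff)
        have h1: "real ((2::nat) ^ m) < real (b - a)" using lt unfolding m_def by (simp only: of_nat_less_iff)
        have h2: "(2::real) ^ m < real b - real a" using h1 unfolding ba by simp
        have h3: "0 < real b - real a" using ya by simp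
        have "log 2 ((2::real) ^ m) < log 2 (real b - real a)"
          using h2 h3 by (subst log_less_cancel_iff) auto
        then show ?thesis unfolding ba m_def by (simp add: log_pow_cancel)
      qed
      then have "real (i0 - 1) < x" unfolding x_def using k by (simp add: field_simps)
      also have "x \<le> of_int \<lceil>x\<rceil>" by (rule le_of_int_ceiling)
      finally have "int (i0 - 1) < \<lceil>x\<rceil>" by linarith
      then show ?thesis unfolding M_def using i2 by linarith
    qed
    then show "y \<in> (\<lambda>i. nm a (u0 + i * k)) ` {1..M}" using i0 by auto
  qed
  have "card (Dset k a b) \<le> card ((\<lambda>i. nm a (u0 + i * k)) ` {1..M})"
    by (rule card_mono[OF _ sub]) simp
  also have "\<dots> \<le> card {1..M}" by (rule card_image_le) simp
  also have "\<dots> = M" by simp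
  finally have "real (card (Dset k a b)) \<le> real M" by simp
  also have "real M = of_int \<lceil>x\<rceil>"
  proof -
    have "0 \<le> x" unfolding x_def using a by simp
    then show ?thesis unfolding M_def by simp
  qed
  finally show ?thesis unfolding x_def .
qed

lemma k_facts:
  assumes "1 \<le> g" "k = nat \<lfloor>log 2 (real g + 1)\<rfloor>"
  shows "1 \<le> k" "real k = real_of_int \<lfloor>log 2 (real g + 1)\<rfloor>" "2 ^ k - 1 \<le> g"
proof -
  have l1: "1 \<le> log 2 (real g + 1)"
  proof -
    have "log 2 2 \<le> log 2 (real g + 1)" using assms by (subst log_le_cancel_iff) auto
    then show ?thesis by simp
  qed
  then have f1: "1 \<le> \<lfloor>log 2 (real g + 1)\<rfloor>" by linarith
  then show "1 \<le> k" using assms by linarith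
  show "real k = real_of_int \<lfloor>log 2 (real g + 1)\<rfloor>" using assms f1 by simp
  have "real k \<le> log 2 (real g + 1)" using assms f1 by linarith
  then have "(2::real) powr real k \<le> 2 powr log 2 (real g + 1)" by (intro powr_mono) auto
  also have "\<dots> = real g + 1" by simp
  finally have "(2::real) ^ k \<le> real g + 1" by (simp add: powr_realpow)
  then have "2 ^ k \<le> g + 1" by (metis of_nat_1 of_nat_add of_nat_le_iff of_nat_numeral of_nat_power)
  then show "2 ^ k - 1 \<le> g" by simp
qed

lemma seg_lengths:
  assumes S: "S \<subseteq> {2..n}"
  shows "(\<Sum>s\<in>insert 1 S. real (nxt S n s - s)) = real n"
proof -
  have "(\<Sum>t=1..n. (\<lambda>s t. (1::real)) (tau t S) t) = (\<Sum>s\<in>insert 1 S. \<Sum>t\<in>{s..<nxt S n s}. (\<lambda>s t. (1::real)) s t)"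
    by (rule group_tau[OF S])
  then show ?thesis by simp
qed

lemma Tref_card:
  assumes S: "S \<subseteq> {2..n}" and n: "1 \<le> n" and g: "1 \<le> g" and kdef: "k = nat \<lfloor>log 2 (real g + 1)\<rfloor>"
  shows "real (card (Tref k n S)) + 1 \<le> L_Cn g (card S) n * (real (card S) + 1)"
proof -
  note kf = k_facts[OF g kdef]
  have f: "finite S" using S finite_subset by blast
  define A where "A = insert 1 S"
  define D where "D s = Dset k s (nxt S n s)" for s
  define m where "m s = nxt S n s - s" for s
  have fA: "finite A" unfolding A_def using f by simp
  have cA: "card A = card S + 1" unfolding A_def using f S by (subst card_insert_disjoint) auto
  have sA: "\<And>s. s \<in> A \<Longrightarrow> 1 \<le> s \<and> s \<le> n" unfolding A_def using S n by auto
  have snx: "\<And>s. s \<in> A \<Longrightarrow> s < nxt S n s" using sA nxt_props(4)[OF f] by blast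
  have c1: "card (Tref k n S) \<le> card S + (\<Sum>s\<in>A. card (D s))"
  proof -
    have "card (Tref k n S) \<le> card S + card (\<Union>s\<in>A. D s)"
      unfolding Tref_def A_def D_def by (rule card_Un_le)
    also have "card (\<Union>s\<in>A. D s) \<le> (\<Sum>s\<in>A. card (D s))" by (rule card_UN_le[OF fA])
    finally show ?thesis by simp
  qed
  have c2: "real (card (D s)) \<le> of_int \<lceil>log 2 (real (m s)) / real k\<rceil>" if "s \<in> A" for s
    unfolding D_def m_def using Dset_card[OF kf(1), of s "nxt S n s"] sA[OF that] snx[OF that] by simp
  have c3: "real (card (Tref k n S)) + 1 \<le> real (card S) + 1 + (\<Sum>s\<in>A. of_int \<lceil>log 2 (real (m s)) / real k\<rceil>)"
  proof -
    have "real (card (Tref k n S)) \<le> real (card S) + (\<Sum>s\<in>A. real (card (D s)))"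
      using c1 by (metis of_nat_add of_nat_le_iff of_nat_sum)
    also have "\<dots> \<le> real (card S) + (\<Sum>s\<in>A. of_int \<lceil>log 2 (real (m s)) / real k\<rceil>)"
      using c2 by (intro add_left_mono sum_mono) auto
    finally show ?thesis by simp
  qed
  show ?thesis
  proof (cases "S = {}")
    case True
    have A1: "A = {1}" unfolding A_def using True by simp
    have "nxt S n 1 = n + 1" unfolding nxt_def using True by simp
    then have m1: "m 1 = n" unfolding m_def by simp
    show ?thesis using c3 unfolding A1 using True m1 kf(2) by (simp add: L_Cn_def)
  next
    case False
    then have C1: "card S \<noteq> 0" using f by simp
    have "(\<Sum>s\<in>A. of_int \<lceil>log 2 (real (m s)) / real k\<rceil>) \<le> (\<Sum>s\<in>A. log 2 (real (m s)) / real k + 1)"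
      by (intro sum_mono) (rule of_int_ceiling_le_add_one)
    also have "\<dots> = (\<Sum>s\<in>A. log 2 (real (m s))) / real k + card A"
      by (simp add: sum.distrib sum_divide_distrib)
    also have "(\<Sum>s\<in>A. log 2 (real (m s))) \<le> card A * log 2 ((\<Sum>s\<in>A. real (m s)) / card A)"
    proof (rule concave_sum_card'[OF log_concave fA])
      show "A \<noteq> {}" unfolding A_def by simp
      fix s assume "s \<in> A" then show "real (m s) \<in> {0<..}" using snx unfolding m_def by simp
    qed simp
    also have "(\<Sum>s\<in>A. real (m s)) = real n" using seg_lengths[OF S] unfolding A_def m_def .
    finally have "(\<Sum>s\<in>A. of_int \<lceil>log 2 (real (m s)) / real k\<rceil>) \<le> card A * log 2 (real n / card A) / real k + card A"
      using kf(1) by (simp add: divide_right_mono)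
    moreover have cA': "real (card A) = real (card S) + 1" using cA by simp
    ultimately have "(\<Sum>s\<in>A. of_int \<lceil>log 2 (real (m s)) / real k\<rceil>) \<le> (real (card S) + 1) * log 2 (real n / (real (card S) + 1)) / real k + (real (card S) + 1)"
      by simp
    then have "real (card (Tref k n S)) + 1 \<le> real (card S) + 1 + ((real (card S) + 1) * log 2 (real n / (real (card S) + 1)) / real k + (real (card S) + 1))"
      using c3 by linarith
    also have "\<dots> = L_Cn g (card S) n * (real (card S) + 1)"
      unfolding L_Cn_def using C1 kf(2) by (simp add: algebra_simps)
    finally show ?thesis .
  qed
qed

lemma map_shift_upt: "1 \<le> s \<Longrightarrow> map (\<lambda>j. ll (s + j - 1)) [1..<j] = map ll [s..<s + j - 1]"
proof (induction j)
  case 0 then show ?case by simp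
next
  case (Suc j)
  show ?case
  proof (cases "j = 0")
    case True then show ?thesis by simp
  next
    case False
    have "[1..<Suc j] = [1..<j] @ [j]" using False by simp
    moreover have "[s..<s + Suc j - 1] = [s..<s + j - 1] @ [s + j - 1]" using False Suc.prems
      by (metis Nat.add_diff_assoc add_Suc_right diff_Suc_1 le_add1 upt_Suc_append
          less_one not_less plus_1_eq_Suc add.commute)
    ultimately show ?thesis using Suc by simp
  qed
qed

lemma sum_shift_seg:
  fixes f :: "nat \<Rightarrow> real"
  assumes "1 \<le> s"
  shows "(\<Sum>j=1..m. f (s + j - 1)) = (\<Sum>t\<in>{s..<s + m}. f t)"
proof -
  have inj: "inj_on (\<lambda>j. s + j - 1) {1..m}" by (rule inj_onI) auto
  have img: "(\<lambda>j. s + j - 1) ` {1..m} = {s..<s + m}"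
  proof
    show "(\<lambda>j. s + j - 1) ` {1..m} \<subseteq> {s..<s + m}" using assms by auto
    show "{s..<s + m} \<subseteq> (\<lambda>j. s + j - 1) ` {1..m}"
    proof
      fix t assume t: "t \<in> {s..<s + m}"
      then have "t = s + (t - s + 1) - 1" "t - s + 1 \<in> {1..m}" by auto
      then show "t \<in> (\<lambda>j. s + j - 1) ` {1..m}" by blast
    qed
  qed
  show ?thesis using sum.reindex[OF inj, of f] img by simp
qed

lemma seg_regret:
  assumes base: "base_alg_ok N A \<rho>" and vl: "\<forall>t. valid_loss N (ll t)"
    and s: "1 \<le> s" "s \<le> e" and i: "i \<in> {1..N}"
  shows "(\<Sum>t\<in>{s..<e}. ebar N (A (map ll [s..<t])) (ll t)) - (\<Sum>t\<in>{s..<e}. ll t i) \<le> \<rho> (real (e - s))"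
proof -
  define L where "L j = ll (s + j - 1)" for j
  have "(\<Sum>j=1..e-s. ebar N (A (map L [1..<j])) (L j)) - (\<Sum>j=1..e-s. L j i) \<le> \<rho> (real (e - s))"
  proof -
    have B2: "\<forall>n (L :: nat \<Rightarrow> nat \<Rightarrow> real). (\<forall>t\<in>{1..n}. valid_loss N (L t)) \<longrightarrow>
        (\<forall>i\<in>{1..N}. (\<Sum>t=1..n. ebar N (A (map L [1..<t])) (L t)) - (\<Sum>t=1..n. L t i) \<le> \<rho> (real n))"
      using base unfolding base_alg_ok_def by (rule conjunct2)
    have v: "\<forall>t\<in>{1..e-s}. valid_loss N (L t)" using vl unfolding L_def by simp
    show ?thesis using bspec[OF mp[OF spec[OF spec[OF B2, of "e - s"], of L] v] i] .
  qed
  moreover have "(\<Sum>j=1..e-s. ebar N (A (map L [1..<j])) (L j)) = (\<Sum>t\<in>{s..<e}. ebar N (A (map ll [s..<t])) (ll t))"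
  proof -
    have "(\<Sum>j=1..e-s. ebar N (A (map L [1..<j])) (L j)) = (\<Sum>j=1..e-s. (\<lambda>t. ebar N (A (map ll [s..<t])) (ll t)) (s + j - 1))"
      unfolding L_def map_shift_upt[OF s(1)] ..
    also have "\<dots> = (\<Sum>t\<in>{s..<s + (e - s)}. ebar N (A (map ll [s..<t])) (ll t))"
      by (rule sum_shift_seg[OF s(1)])
    finally show ?thesis using s by simp
  qed
  moreover have "(\<Sum>j=1..e-s. L j i) = (\<Sum>t\<in>{s..<e}. ll t i)"
    unfolding L_def using sum_shift_seg[OF s(1), of "\<lambda>t. ll t i" "e - s"] s by simp
  ultimately show ?thesis by simp
qed

lemma seg_loss:
  assumes n: "1 \<le> n" and T: "T \<subseteq> {2..n}" and ST: "S \<subseteq> T" and a: "\<forall>c\<le>card S. a c \<in> {1..N}"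
    and base: "base_alg_ok N A \<rho>" and vl: "\<forall>t. valid_loss N (ll t)" and rho: "rho_ok \<rho>"
  shows "Abar N A ll n T - meta_loss ll n S a \<le> (real (card T) + 1) * \<rho> (real n / (real (card T) + 1))"
proof -
  have fT: "finite T" using T finite_subset by blast
  have S: "S \<subseteq> {2..n}" using T ST by blast
  have fS: "finite S" using S finite_subset by blast
  define B where "B = insert 1 T"
  have Ab: "Abar N A ll n T = (\<Sum>s\<in>B. \<Sum>t\<in>{s..<nxt T n s}. ebar N (A (map ll [s..<t])) (ll t))"
    unfolding Abar_eq[OF T] B_def by (rule group_tau[OF T])
  have ml: "meta_loss ll n S a = (\<Sum>s\<in>B. \<Sum>t\<in>{s..<nxt T n s}. ll t (a (cnt S s)))"
  proof -
    have "meta_loss ll n S a = (\<Sum>t=1..n. ll t (a (cnt S t)))" by (rule meta_loss_eq[OF S])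
    also have "\<dots> = (\<Sum>t=1..n. ll t (a (cnt S (tau t T))))"
    proof (rule sum.cong[OF refl])
      fix t assume t: "t \<in> {1..n}"
      have tb: "tau t T \<in> insert 1 T" using tau_props(1)[OF fT] .
      have "tau t T \<le> t \<and> t < nxt T n (tau t T)" using seg_iff[OF T tb, of t] t by simp
      then show "ll t (a (cnt S t)) = ll t (a (cnt S (tau t T)))" using seg_cnt[OF ST fT, where s="tau t T" and t=t and n=n] by simp
    qed
    also have "\<dots> = (\<Sum>s\<in>B. \<Sum>t\<in>{s..<nxt T n s}. ll t (a (cnt S s)))"
      unfolding B_def using group_tau[OF T, of "\<lambda>s t. ll t (a (cnt S s))"] by simp
    finally show ?thesis .
  qed
  have sB: "\<And>s. s \<in> B \<Longrightarrow> 1 \<le> s \<and> s \<le> n \<and> s < nxt T n s"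
  proof -
    fix s assume s: "s \<in> B"
    have s1: "1 \<le> s" "s \<le> n" using s T n unfolding B_def by auto
    then show "1 \<le> s \<and> s \<le> n \<and> s < nxt T n s" using nxt_props(4)[OF fT] by blast
  qed
  have "Abar N A ll n T - meta_loss ll n S a
      = (\<Sum>s\<in>B. (\<Sum>t\<in>{s..<nxt T n s}. ebar N (A (map ll [s..<t])) (ll t)) - (\<Sum>t\<in>{s..<nxt T n s}. ll t (a (cnt S s))))"
    unfolding Ab ml by (simp add: sum_subtractf)
  also have "\<dots> \<le> (\<Sum>s\<in>B. \<rho> (real (nxt T n s - s)))"
  proof (rule sum_mono)
    fix s assume s: "s \<in> B"
    have i: "a (cnt S s) \<in> {1..N}" using a cnt_le[OF fS, of s] by blast
    show "(\<Sum>t\<in>{s..<nxt T n s}. ebar N (A (map ll [s..<t])) (ll t)) - (\<Sum>t\<in>{s..<nxt T n s}. ll t (a (cnt S s)))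
          \<le> \<rho> (real (nxt T n s - s))"
      using seg_regret[OF base vl _ _ i, of s "nxt T n s"] sB[OF s] by simp
  qed
  also have "\<dots> \<le> card B * \<rho> ((\<Sum>s\<in>B. real (nxt T n s - s)) / card B)"
  proof (rule concave_sum_card)
    show "concave_on {0..} \<rho>" using rho unfolding rho_ok_def by simp
  qed (auto simp: B_def fT)
  also have "(\<Sum>s\<in>B. real (nxt T n s - s)) = real n" unfolding B_def by (rule seg_lengths[OF T])
  also have "real (card B) = real (card T) + 1" unfolding B_def using fT T by (subst card_insert_disjoint) auto
  finally show ?thesis .
qed

definition Phi :: "nat \<Rightarrow> ((nat \<Rightarrow> real) list \<Rightarrow> (nat \<Rightarrow> real)) \<Rightarrow> (nat \<Rightarrow> nat set \<Rightarrow> real)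
                   \<Rightarrow> (nat \<Rightarrow> nat \<Rightarrow> real) \<Rightarrow> nat \<Rightarrow> real \<Rightarrow> real" where
  "Phi N A w ll t e = (\<Sum>S\<in>paths t. w t S * exp (- e * Abar N A ll t S))"

definition xloss :: "nat \<Rightarrow> ((nat \<Rightarrow> real) list \<Rightarrow> (nat \<Rightarrow> real)) \<Rightarrow> (nat \<Rightarrow> nat \<Rightarrow> real) \<Rightarrow> nat \<Rightarrow> nat set \<Rightarrow> real" where
  "xloss N A ll t S = ebar N (A (map ll [tau t S..<t])) (ll t)"

lemma ebar_range:
  assumes "is_distrib N p" "valid_loss N l"
  shows "0 \<le> ebar N p l" "ebar N p l \<le> 1"
proof -
  show "0 \<le> ebar N p l" unfolding ebar_def using assms
    by (intro sum_nonneg mult_nonneg_nonneg) (auto simp: is_distrib_def valid_loss_def)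
  have "ebar N p l \<le> (\<Sum>i=1..N. p i)" unfolding ebar_def using assms
    by (intro sum_mono) (auto simp: is_distrib_def valid_loss_def intro: mult_left_le)
  then show "ebar N p l \<le> 1" using assms by (simp add: is_distrib_def)
qed

lemma A_dist:
  assumes "base_alg_ok N A \<rho>" "\<forall>t. valid_loss N (ll t)"
  shows "is_distrib N (A (map ll xs))"
  using assms unfolding base_alg_ok_def by auto

lemma xloss_range:
  assumes "base_alg_ok N A \<rho>" "\<forall>t. valid_loss N (ll t)"
  shows "0 \<le> xloss N A ll t S" "xloss N A ll t S \<le> 1"
  unfolding xloss_def using ebar_range[OF A_dist[OF assms]] assms(2) by auto

lemma Abar_step:
  assumes "S \<in> paths (Suc t)"
  shows "Abar N A ll (Suc t) S = Abar N A ll t (trunc t S) + xloss N A ll (Suc t) S"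
proof -
  have S: "S \<subseteq> {2..Suc t}" using assms by (simp add: paths_def)
  have S': "trunc t S \<subseteq> {2..t}" using S by (auto simp: trunc_def)
  have "Abar N A ll (Suc t) S = (\<Sum>s=1..t. ebar N (A (map ll [tau s S..<s])) (ll s)) + xloss N A ll (Suc t) S"
    unfolding Abar_eq[OF S] xloss_def by simp
  also have "(\<Sum>s=1..t. ebar N (A (map ll [tau s S..<s])) (ll s)) = Abar N A ll t (trunc t S)"
    unfolding Abar_eq[OF S'] by (intro sum.cong refl) (simp add: tau_trunc)
  finally show ?thesis .
qed

lemma paths_fin: "finite (paths t)" by (simp add: paths_def)
lemma paths_ne: "paths t \<noteq> {}" by (auto simp: paths_def)

lemma w_sum: "(\<Sum>S\<in>paths t. whatL1 g \<epsilon> t S) = 1"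
  unfolding whatL1_def by (rule markov_sum1)

lemma Phi_pos:
  assumes e: "0 < \<epsilon>"
  shows "0 < Phi N A (whatL1 g \<epsilon>) ll t c"
proof -
  have "\<exists>S\<in>paths t. whatL1 g \<epsilon> t S \<noteq> 0"
  proof (rule ccontr)
    assume "\<not> ?thesis"
    then have "(\<Sum>S\<in>paths t. whatL1 g \<epsilon> t S) = 0" by simp
    then show False using w_sum by simp
  qed
  then obtain S0 where S0: "S0 \<in> paths t" "whatL1 g \<epsilon> t S0 > 0" using what_nonneg[OF e] by (metis less_eq_real_def)
  show ?thesis unfolding Phi_def
    by (rule sum_pos2[OF paths_fin S0(1)]) (use S0 what_nonneg[OF e] in auto)
qed

lemma Phi_marg:
  "(\<Sum>S\<in>paths (Suc t). whatL1 g \<epsilon> (Suc t) S * exp (- c * Abar N A ll t (trunc t S))) = Phi N A (whatL1 g \<epsilon>) ll t c"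
  unfolding Phi_def whatL1_def by (rule markov_marginal)

lemma Phi_0: "Phi N A (whatL1 g \<epsilon>) ll 0 c = 1"
proof -
  have "paths 0 = {{}}" by (auto simp: paths_def)
  moreover have "Abar N A ll 0 {} = 0" using Abar_eq[of "{}" 0] by simp
  moreover have "whatL1 g \<epsilon> 0 {} = 1" by (simp add: whatL1_def markov_w_def)
  ultimately show ?thesis by (simp add: Phi_def)
qed

lemma palg_ebar:
  "ebar N (palg N A w \<eta> ll t) (ll t) = (\<Sum>S\<in>paths t. qalg N A w \<eta> ll t S * xloss N A ll t S)"
proof -
  have "ebar N (palg N A w \<eta> ll t) (ll t)
      = (\<Sum>i=1..N. \<Sum>S\<in>paths t. qalg N A w \<eta> ll t S * A (map ll [tau t S..<t]) i * ll t i)"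
    unfolding ebar_def palg_def by (simp add: sum_distrib_right)
  also have "\<dots> = (\<Sum>S\<in>paths t. \<Sum>i=1..N. qalg N A w \<eta> ll t S * (A (map ll [tau t S..<t]) i * ll t i))"
    by (subst sum.swap) (simp add: mult.assoc)
  also have "\<dots> = (\<Sum>S\<in>paths t. qalg N A w \<eta> ll t S * xloss N A ll t S)"
    unfolding xloss_def ebar_def by (simp add: sum_distrib_left)
  finally show ?thesis .
qed

lemma ew_step:
  assumes e: "0 < \<epsilon>" and base: "base_alg_ok N A \<rho>" and vl: "\<forall>t. valid_loss N (ll t)"
  shows "ln (Phi N A (whatL1 g \<epsilon>) ll (Suc t) (\<eta> (Suc t)))
     \<le> ln (Phi N A (whatL1 g \<epsilon>) ll t (\<eta> (Suc t))) - \<eta> (Suc t) * ebar N (palg N A (whatL1 g \<epsilon>) \<eta> ll (Suc t)) (ll (Suc t))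
       + (\<eta> (Suc t))\<^sup>2 / 8"
proof -
  define w where "w = whatL1 g \<epsilon>"
  define c where "c = \<eta> (Suc t)"
  define D where "D = Phi N A w ll t c"
  define v where "v S = w (Suc t) S * exp (- c * Abar N A ll t (trunc t S))" for S
  define q where "q S = v S / D" for S
  define x where "x S = xloss N A ll (Suc t) S" for S
  have Dpos: "0 < D" unfolding D_def w_def by (rule Phi_pos[OF e])
  have vD: "(\<Sum>S\<in>paths (Suc t). v S) = D" unfolding v_def D_def w_def by (rule Phi_marg)
  have qalg_eq: "qalg N A w \<eta> ll (Suc t) S = q S" for S
    unfolding qalg_def q_def v_def c_def using vD[unfolded v_def c_def] by simp
  have q0: "0 \<le> q S" for S unfolding q_def v_def w_def using Dpos what_nonneg[OF e] by simp
  have q1: "(\<Sum>S\<in>paths (Suc t). q S) = 1" unfolding q_def using vD Dpos by (simp add: sum_divide_distrib[symmetric])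
  have x01: "0 \<le> x S \<and> x S \<le> 1" for S unfolding x_def using xloss_range[OF base vl] by simp
  have m: "ebar N (palg N A w \<eta> ll (Suc t)) (ll (Suc t)) = (\<Sum>S\<in>paths (Suc t). q S * x S)"
    unfolding palg_ebar qalg_eq x_def ..
  have "Phi N A w ll (Suc t) c = (\<Sum>S\<in>paths (Suc t). v S * exp (- c * x S))"
    unfolding Phi_def v_def x_def
    by (intro sum.cong refl) (simp add: Abar_step algebra_simps exp_add[symmetric])
  also have "\<dots> = D * (\<Sum>S\<in>paths (Suc t). q S * exp ((- c) * x S))"
    unfolding q_def using Dpos by (simp add: sum_distrib_left)
  also have "\<dots> \<le> D * exp ((- c) * (\<Sum>S\<in>paths (Suc t). q S * x S) + (- c)\<^sup>2 / 8)"
    using hoeff_fin[OF paths_fin, where p=q and x=x and lam="- c"] q0 q1 x01 Dpos by simp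
  finally have le: "Phi N A w ll (Suc t) c \<le> D * exp (- c * ebar N (palg N A w \<eta> ll (Suc t)) (ll (Suc t)) + c\<^sup>2 / 8)"
    unfolding m by simp
  have Ppos: "0 < Phi N A w ll (Suc t) c" unfolding w_def by (rule Phi_pos[OF e])
  have "ln (Phi N A w ll (Suc t) c) \<le> ln (D * exp (- c * ebar N (palg N A w \<eta> ll (Suc t)) (ll (Suc t)) + c\<^sup>2 / 8))"
    using le Ppos by simp
  also have "\<dots> = ln D - c * ebar N (palg N A w \<eta> ll (Suc t)) (ll (Suc t)) + c\<^sup>2 / 8"
    using Dpos by (simp add: ln_mult)
  finally show ?thesis unfolding D_def w_def c_def .
qed

lemma ew_jensen:
  assumes e: "0 < \<epsilon>" and c: "0 < c'" "c' \<le> c"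
  shows "ln (Phi N A (whatL1 g \<epsilon>) ll t c') / c' \<le> ln (Phi N A (whatL1 g \<epsilon>) ll t c) / c"
proof -
  define w where "w = whatL1 g \<epsilon>"
  define y where "y S = exp (- c * Abar N A ll t S)" for S
  define r where "r = c' / c"
  have r: "0 < r" "r \<le> 1" unfolding r_def using c by auto
  have yr: "y S powr r = exp (- c' * Abar N A ll t S)" for S
    unfolding y_def r_def using c by (simp add: powr_def)
  have "Phi N A w ll t c' = (\<Sum>S\<in>paths t. w t S * y S powr r)" unfolding Phi_def yr ..
  also have "\<dots> \<le> (\<Sum>S\<in>paths t. w t S * y S) powr r"
    by (rule powr_jensen[OF r paths_fin paths_ne]) (use what_nonneg[OF e] w_sum in \<open>auto simp: w_def y_def\<close>)
  also have "(\<Sum>S\<in>paths t. w t S * y S) = Phi N A w ll t c" unfolding Phi_def y_def ..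
  finally have le: "Phi N A w ll t c' \<le> Phi N A w ll t c powr r" .
  have p1: "0 < Phi N A w ll t c'" unfolding w_def by (rule Phi_pos[OF e])
  have p2: "0 < Phi N A w ll t c" unfolding w_def by (rule Phi_pos[OF e])
  have p3: "0 < Phi N A w ll t c powr r" using p2 by simp
  have "ln (Phi N A w ll t c') \<le> ln (Phi N A w ll t c powr r)" using le p1 p3 by (subst ln_le_cancel_iff) auto
  also have "\<dots> = r * ln (Phi N A w ll t c)" using p2 by (simp add: ln_powr)
  finally have "ln (Phi N A w ll t c') \<le> c' / c * ln (Phi N A w ll t c)" unfolding r_def .
  then show ?thesis unfolding w_def using c by (simp add: field_simps)
qed

lemma ew_bound:
  assumes e: "0 < \<epsilon>" and base: "base_alg_ok N A \<rho>" and vl: "\<forall>t. valid_loss N (ll t)"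
    and ep: "\<forall>t. 0 < \<eta> t" and ed: "\<forall>t\<ge>1. \<eta> (t + 1) \<le> \<eta> t"
    and n: "1 \<le> n" and T: "T \<in> paths n" and wpos: "0 < whatL1 g \<epsilon> n T"
  shows "(\<Sum>t=1..n. ebar N (palg N A (whatL1 g \<epsilon>) \<eta> ll t) (ll t))
     \<le> Abar N A ll n T + ln (1 / whatL1 g \<epsilon> n T) / \<eta> n + (\<Sum>t=1..n. \<eta> t / 8)"
proof -
  define m where "m t = ebar N (palg N A (whatL1 g \<epsilon>) \<eta> ll t) (ll t)" for t
  define P where "P t c = Phi N A (whatL1 g \<epsilon>) ll t c" for t c
  have Ppos: "0 < P t c" for t c unfolding P_def by (rule Phi_pos[OF e])
  have step: "ln (P (Suc t) (\<eta> (Suc t))) / \<eta> (Suc t) \<le> ln (P t (\<eta> (Suc t))) / \<eta> (Suc t) - m (Suc t) + \<eta> (Suc t) / 8" for t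
  proof -
    have h: "ln (P (Suc t) (\<eta> (Suc t))) \<le> ln (P t (\<eta> (Suc t))) - \<eta> (Suc t) * m (Suc t) + (\<eta> (Suc t))\<^sup>2 / 8"
      unfolding P_def m_def by (rule ew_step[OF e base vl])
    have ept: "0 < \<eta> (Suc t)" using ep by simp
    have "ln (P (Suc t) (\<eta> (Suc t))) / \<eta> (Suc t) \<le> (ln (P t (\<eta> (Suc t))) - \<eta> (Suc t) * m (Suc t) + (\<eta> (Suc t))\<^sup>2 / 8) / \<eta> (Suc t)"
      using h ept by (simp add: divide_right_mono)
    also have "\<dots> = ln (P t (\<eta> (Suc t))) / \<eta> (Suc t) - m (Suc t) + \<eta> (Suc t) / 8"
      using ept by (simp add: field_simps power2_eq_square)
    finally show ?thesis .
  qed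
  have claim: "ln (P t (\<eta> (Suc t))) / \<eta> (Suc t) \<le> - (\<Sum>s=1..t. m s) + (\<Sum>s=1..t. \<eta> s / 8)" for t
  proof (induction t)
    case 0
    then show ?case unfolding P_def using Phi_0 by simp
  next
    case (Suc t)
    have j: "ln (P (Suc t) (\<eta> (Suc (Suc t)))) / \<eta> (Suc (Suc t)) \<le> ln (P (Suc t) (\<eta> (Suc t))) / \<eta> (Suc t)"
      unfolding P_def using ed ep by (intro ew_jensen[OF e]) auto
    show ?case using j step[of t] Suc.IH by simp
  qed
  obtain n0 where n0: "n = Suc n0" using n by (cases n) auto
  have fin: "ln (P n (\<eta> n)) / \<eta> n \<le> - (\<Sum>s=1..n. m s) + (\<Sum>s=1..n. \<eta> s / 8)"
    using step[of n0] claim[of n0] unfolding n0 by simp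
  have enp: "0 < \<eta> n" using ep by simp
  have w0: "0 \<le> whatL1 g \<epsilon> n S" for S using what_nonneg[OF e] .
  have low: "whatL1 g \<epsilon> n T * exp (- \<eta> n * Abar N A ll n T) \<le> P n (\<eta> n)"
    unfolding P_def Phi_def
    by (rule member_le_sum[OF T _ paths_fin, of "\<lambda>S. whatL1 g \<epsilon> n S * exp (- \<eta> n * Abar N A ll n S)"])
       (use w0 in simp)
  have "ln (whatL1 g \<epsilon> n T) - \<eta> n * Abar N A ll n T \<le> ln (P n (\<eta> n))"
  proof -
    have "ln (whatL1 g \<epsilon> n T * exp (- \<eta> n * Abar N A ll n T)) \<le> ln (P n (\<eta> n))"
      using low wpos Ppos by (subst ln_le_cancel_iff) auto
    then show ?thesis using wpos by (simp add: ln_mult)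
  qed
  then have "(ln (whatL1 g \<epsilon> n T) - \<eta> n * Abar N A ll n T) / \<eta> n \<le> ln (P n (\<eta> n)) / \<eta> n"
    using enp by (simp add: divide_right_mono)
  also have "(ln (whatL1 g \<epsilon> n T) - \<eta> n * Abar N A ll n T) / \<eta> n = ln (whatL1 g \<epsilon> n T) / \<eta> n - Abar N A ll n T"
    using enp by (simp add: field_simps)
  finally have "ln (whatL1 g \<epsilon> n T) / \<eta> n - Abar N A ll n T \<le> - (\<Sum>s=1..n. m s) + (\<Sum>s=1..n. \<eta> s / 8)"
    using fin by linarith
  moreover have "ln (1 / whatL1 g \<epsilon> n T) = - ln (whatL1 g \<epsilon> n T)" using wpos by (simp add: ln_div)
  ultimately show ?thesis unfolding m_def by (simp add: algebra_simps)
qed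

definition Hs :: "nat \<Rightarrow> nat \<Rightarrow> nat list set" where
  "Hs N n = {hs. length hs = n \<and> set hs \<subseteq> {1..N}}"

definition Qp :: "(nat list \<Rightarrow> nat \<Rightarrow> real) \<Rightarrow> nat list \<Rightarrow> real" where
  "Qp P hs = (\<Prod>t=1..length hs. P (take (t - 1) hs) (hs ! (t - 1)))"

definition Yp :: "nat \<Rightarrow> (nat list \<Rightarrow> nat \<Rightarrow> real) \<Rightarrow> (nat list \<Rightarrow> nat \<Rightarrow> real) \<Rightarrow> nat list \<Rightarrow> real" where
  "Yp N P X hs = (\<Sum>t=1..length hs. X (take (t - 1) hs) (hs ! (t - 1))
                     - (\<Sum>i=1..N. P (take (t - 1) hs) i * X (take (t - 1) hs) i))"

lemma Hs_fin: "finite (Hs N n)"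
proof -
  have "Hs N n = {xs. set xs \<subseteq> {1..N} \<and> length xs = n}" unfolding Hs_def by auto
  then show ?thesis using finite_lists_length_eq[of "{1..N}" n] by simp
qed

lemma Hs_Suc: "Hs N (Suc n) = (\<lambda>(h, i). h @ [i]) ` (Hs N n \<times> {1..N})"
proof
  show "(\<lambda>(h, i). h @ [i]) ` (Hs N n \<times> {1..N}) \<subseteq> Hs N (Suc n)" unfolding Hs_def by auto
  show "Hs N (Suc n) \<subseteq> (\<lambda>(h, i). h @ [i]) ` (Hs N n \<times> {1..N})"
  proof
    fix hs assume hs: "hs \<in> Hs N (Suc n)"
    then have ne: "hs \<noteq> []" unfolding Hs_def by auto
    have e: "hs = butlast hs @ [last hs]" using ne by simp
    have "butlast hs \<in> Hs N n" using hs unfolding Hs_def by (auto dest: in_set_butlastD)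
    moreover have "last hs \<in> {1..N}" using hs last_in_set[OF ne] unfolding Hs_def by auto
    ultimately show "hs \<in> (\<lambda>(h, i). h @ [i]) ` (Hs N n \<times> {1..N})" using e by force
  qed
qed

lemma Hs_inj: "inj_on (\<lambda>(h, i). h @ [i]) (Hs N n \<times> {1..N})"
  by (rule inj_onI) auto

lemma Qp_snoc: "Qp P (h @ [i]) = Qp P h * P h i"
proof -
  have "Qp P (h @ [i]) = (\<Prod>t=1..length h. P (take (t - 1) (h @ [i])) ((h @ [i]) ! (t - 1))) * P h i"
    unfolding Qp_def by (simp add: prod.cl_ivl_Suc)
  also have "(\<Prod>t=1..length h. P (take (t - 1) (h @ [i])) ((h @ [i]) ! (t - 1))) = Qp P h"
    unfolding Qp_def by (intro prod.cong refl) (auto simp: nth_append)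
  finally show ?thesis .
qed

lemma Yp_snoc: "Yp N P X (h @ [i]) = Yp N P X h + (X h i - (\<Sum>j=1..N. P h j * X h j))"
proof -
  have "Yp N P X (h @ [i]) = (\<Sum>t=1..length h. X (take (t - 1) (h @ [i])) ((h @ [i]) ! (t - 1))
                     - (\<Sum>j=1..N. P (take (t - 1) (h @ [i])) j * X (take (t - 1) (h @ [i])) j))
         + (X h i - (\<Sum>j=1..N. P h j * X h j))"
    unfolding Yp_def by (simp add: sum.cl_ivl_Suc)
  also have "(\<Sum>t=1..length h. X (take (t - 1) (h @ [i])) ((h @ [i]) ! (t - 1))
                     - (\<Sum>j=1..N. P (take (t - 1) (h @ [i])) j * X (take (t - 1) (h @ [i])) j)) = Yp N P X h"
    unfolding Yp_def by (intro sum.cong refl) (auto simp: nth_append)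
  finally show ?thesis .
qed

lemma sum_Hs_Suc:
  "(\<Sum>hs\<in>Hs N (Suc n). f hs) = (\<Sum>h\<in>Hs N n. \<Sum>i=1..N. f (h @ [i]))"
proof -
  have "(\<Sum>hs\<in>Hs N (Suc n). f hs) = (\<Sum>x\<in>Hs N n \<times> {1..N}. f ((\<lambda>(h, i). h @ [i]) x))"
    unfolding Hs_Suc using sum.reindex[OF Hs_inj, of f] by (simp add: o_def)
  also have "\<dots> = (\<Sum>h\<in>Hs N n. \<Sum>i=1..N. f (h @ [i]))"
    by (subst sum.cartesian_product) (simp add: split_def)
  finally show ?thesis .
qed

locale histP =
  fixes N :: nat and P X :: "nat list \<Rightarrow> nat \<Rightarrow> real"
  assumes P0: "\<And>h i. i \<in> {1..N} \<Longrightarrow> 0 \<le> P h i"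
    and P1: "\<And>h. (\<Sum>i=1..N. P h i) = 1"
    and X01: "\<And>h i. 0 \<le> X h i \<and> X h i \<le> 1"
begin

lemma Qp_nonneg: "hs \<in> Hs N n \<Longrightarrow> 0 \<le> Qp P hs"
  unfolding Qp_def Hs_def
  by (intro prod_nonneg) (auto intro!: P0 simp: subset_iff)

lemma Qp_sum: "(\<Sum>hs\<in>Hs N n. Qp P hs) = 1"
proof (induction n)
  case 0
  have "Hs N 0 = {[]}" unfolding Hs_def by auto
  then show ?case by (simp add: Qp_def)
next
  case (Suc n)
  have "(\<Sum>hs\<in>Hs N (Suc n). Qp P hs) = (\<Sum>h\<in>Hs N n. Qp P h * (\<Sum>i=1..N. P h i))"
    unfolding sum_Hs_Suc Qp_snoc by (simp add: sum_distrib_left)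
  also have "\<dots> = 1" using Suc P1 by simp
  finally show ?case .
qed

lemma mgf:
  "(\<Sum>hs\<in>Hs N n. Qp P hs * exp (lam * Yp N P X hs)) \<le> exp (lam\<^sup>2 * n / 8)"
proof (induction n)
  case 0
  have "Hs N 0 = {[]}" unfolding Hs_def by auto
  then show ?case by (simp add: Qp_def Yp_def)
next
  case (Suc n)
  have inner: "(\<Sum>i=1..N. P h i * exp (lam * (X h i - (\<Sum>j=1..N. P h j * X h j)))) \<le> exp (lam\<^sup>2 / 8)" for h
  proof -
    define m where "m = (\<Sum>j=1..N. P h j * X h j)"
    have "(\<Sum>i=1..N. P h i * exp (lam * (X h i - m))) = (\<Sum>i=1..N. P h i * exp (lam * X h i)) * exp (- lam * m)"
      unfolding sum_distrib_right by (intro sum.cong refl) (simp add: mult.assoc exp_add[symmetric] algebra_simps)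
    also have "\<dots> \<le> exp (lam * m + lam\<^sup>2 / 8) * exp (- lam * m)"
      using hoeff_fin[of "{1..N}" "P h" "X h" lam] P0 P1 X01 unfolding m_def by simp
    also have "\<dots> = exp (lam\<^sup>2 / 8)" by (simp add: exp_add[symmetric])
    finally show ?thesis unfolding m_def .
  qed
  have "(\<Sum>hs\<in>Hs N (Suc n). Qp P hs * exp (lam * Yp N P X hs))
      = (\<Sum>h\<in>Hs N n. Qp P h * exp (lam * Yp N P X h) *
           (\<Sum>i=1..N. P h i * exp (lam * (X h i - (\<Sum>j=1..N. P h j * X h j)))))"
    unfolding sum_Hs_Suc
  proof (intro sum.cong refl)
    fix h
    show "(\<Sum>i = 1..N. Qp P (h @ [i]) * exp (lam * Yp N P X (h @ [i]))) =
      Qp P h * exp (lam * Yp N P X h) * (\<Sum>i = 1..N. P h i * exp (lam * (X h i - (\<Sum>j = 1..N. P h j * X h j))))"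
      unfolding Qp_snoc Yp_snoc sum_distrib_left by (intro sum.cong refl) (simp add: distrib_left exp_add mult_ac)
  qed
  also have "\<dots> \<le> (\<Sum>h\<in>Hs N n. Qp P h * exp (lam * Yp N P X h) * exp (lam\<^sup>2 / 8))"
    by (intro sum_mono mult_left_mono inner) (simp add: Qp_nonneg)
  also have "\<dots> = (\<Sum>h\<in>Hs N n. Qp P h * exp (lam * Yp N P X h)) * exp (lam\<^sup>2 / 8)"
    by (simp add: sum_distrib_right)
  also have "\<dots> \<le> exp (lam\<^sup>2 * n / 8) * exp (lam\<^sup>2 / 8)"
    using Suc by (intro mult_right_mono) auto
  also have "\<dots> = exp (lam\<^sup>2 * Suc n / 8)" by (simp add: exp_add[symmetric] field_simps)
  finally show ?case .
qed

lemma tail_bound: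
  assumes d: "0 < \<delta>" "\<delta> < 1" and n: "1 \<le> n"
    and E: "\<And>hs. hs \<in> Hs N n \<Longrightarrow> \<not> E hs \<Longrightarrow> sqrt (n / 2 * ln (1 / \<delta>)) < Yp N P X hs"
  shows "(\<Sum>hs\<in>{hs\<in>Hs N n. E hs}. Qp P hs) \<ge> 1 - \<delta>"
proof -
  define x where "x = sqrt (n / 2 * ln (1 / \<delta>))"
  define lam where "lam = 4 * x / n"
  have lnd: "0 < ln (1 / \<delta>)" using d by simp
  have x0: "0 < x" unfolding x_def using lnd n by simp
  have x2: "x\<^sup>2 = n / 2 * ln (1 / \<delta>)" unfolding x_def using lnd by simp
  have lam0: "0 \<le> lam" unfolding lam_def using x0 by simp
  have fin: "finite (Hs N n)" by (rule Hs_fin)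
  have split: "(\<Sum>hs\<in>Hs N n. Qp P hs) = (\<Sum>hs\<in>{hs\<in>Hs N n. E hs}. Qp P hs) + (\<Sum>hs\<in>{hs\<in>Hs N n. \<not> E hs}. Qp P hs)"
  proof -
    have u: "Hs N n = {hs\<in>Hs N n. E hs} \<union> {hs\<in>Hs N n. \<not> E hs}" by auto
    show ?thesis by (subst u, rule sum.union_disjoint) (use fin in auto)
  qed
  have "(\<Sum>hs\<in>{hs\<in>Hs N n. \<not> E hs}. Qp P hs) \<le> (\<Sum>hs\<in>{hs\<in>Hs N n. \<not> E hs}. Qp P hs * exp (lam * (Yp N P X hs - x)))"
  proof (rule sum_mono)
    fix hs assume hs: "hs \<in> {hs\<in>Hs N n. \<not> E hs}"
    then have "x < Yp N P X hs" using E unfolding x_def by blast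
    then have e1: "1 \<le> exp (lam * (Yp N P X hs - x))" using lam0 by simp
    have q: "0 \<le> Qp P hs" using Qp_nonneg hs by auto
    show "Qp P hs \<le> Qp P hs * exp (lam * (Yp N P X hs - x))"
      using mult_left_mono[OF e1 q] by simp
  qed
  also have "\<dots> \<le> (\<Sum>hs\<in>Hs N n. Qp P hs * exp (lam * (Yp N P X hs - x)))"
    by (rule sum_mono2[OF fin]) (auto intro!: mult_nonneg_nonneg Qp_nonneg)
  also have "\<dots> = (\<Sum>hs\<in>Hs N n. Qp P hs * exp (lam * Yp N P X hs)) * exp (- lam * x)"
    unfolding sum_distrib_right by (intro sum.cong refl) (simp add: mult.assoc exp_add[symmetric] algebra_simps)
  also have "\<dots> \<le> exp (lam\<^sup>2 * n / 8) * exp (- lam * x)" using mgf by (intro mult_right_mono) auto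
  also have "\<dots> = exp (lam\<^sup>2 * n / 8 - lam * x)" by (simp add: exp_add[symmetric])
  also have "lam\<^sup>2 * n / 8 - lam * x = - 2 * x\<^sup>2 / n" unfolding lam_def using n by (simp add: field_simps power2_eq_square)
  also have "\<dots> = - ln (1 / \<delta>)" unfolding x2 using n by simp
  also have "exp (- ln (1 / \<delta>)) = \<delta>" using d by (simp add: ln_div)
  finally have "(\<Sum>hs\<in>{hs\<in>Hs N n. \<not> E hs}. Qp P hs) \<le> \<delta>" .
  then show ?thesis using split Qp_sum[of n] by linarith
qed

end

lemma Abar_cong:
  assumes "S \<subseteq> {2..u}" "\<And>s. 1 \<le> s \<Longrightarrow> s \<le> u \<Longrightarrow> ll s = ll' s"
  shows "Abar N A ll u S = Abar N A ll' u S"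
proof -
  have f: "finite S" using assms(1) finite_subset by blast
  show ?thesis unfolding Abar_eq[OF assms(1)]
  proof (intro sum.cong refl)
    fix s assume s: "s \<in> {1..u}"
    have ms: "map ll [tau s S..<s] = map ll' [tau s S..<s]"
      using assms(2) s tau_props(2)[OF f, of s] by (intro map_cong refl) auto
    have eq: "ll s = ll' s" using assms(2) s by simp
    show "ebar N (A (map ll [tau s S..<s])) (ll s) = ebar N (A (map ll' [tau s S..<s])) (ll' s)"
      by (simp only: ms eq)
  qed
qed

lemma qalg_cong:
  assumes "\<And>s. 1 \<le> s \<Longrightarrow> s < t \<Longrightarrow> ll s = ll' s" "S \<in> paths t"
  shows "qalg N A w \<eta> ll t S = qalg N A w \<eta> ll' t S"
proof -
  have c: "Abar N A ll (t - 1) (trunc (t - 1) S') = Abar N A ll' (t - 1) (trunc (t - 1) S')" if "S' \<in> paths t" for S'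
    by (rule Abar_cong) (use assms(1) that in \<open>auto simp: trunc_def paths_def\<close>)
  have den: "(\<Sum>S'\<in>paths t. w t S' * exp (- \<eta> t * Abar N A ll (t - 1) (trunc (t - 1) S')))
      = (\<Sum>S'\<in>paths t. w t S' * exp (- \<eta> t * Abar N A ll' (t - 1) (trunc (t - 1) S')))"
  proof (intro sum.cong refl)
    fix S' assume "S' \<in> paths t"
    from c[OF this] show "w t S' * exp (- \<eta> t * Abar N A ll (t - 1) (trunc (t - 1) S')) =
        w t S' * exp (- \<eta> t * Abar N A ll' (t - 1) (trunc (t - 1) S'))" by (rule arg_cong)
  qed
  show ?thesis unfolding qalg_def den c[OF assms(2)] ..
qed

lemma palg_cong:
  assumes "\<And>s. 1 \<le> s \<Longrightarrow> s < t \<Longrightarrow> ll s = ll' s"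
  shows "palg N A w \<eta> ll t = palg N A w \<eta> ll' t"
proof
  fix i
  show "palg N A w \<eta> ll t i = palg N A w \<eta> ll' t i" unfolding palg_def
  proof (intro sum.cong refl)
    fix S assume S: "S \<in> paths t"
    have f: "finite S" using S by (auto simp: paths_def intro: finite_subset)
    have ms: "map ll [tau t S..<t] = map ll' [tau t S..<t]"
      using assms tau_props(2)[OF f, of t] by (intro map_cong refl) auto
    have qe: "qalg N A w \<eta> ll t S = qalg N A w \<eta> ll' t S"
      by (rule qalg_cong[OF _ S]) (rule assms)
    show "qalg N A w \<eta> ll t S * A (map ll [tau t S..<t]) i = qalg N A w \<eta> ll' t S * A (map ll' [tau t S..<t]) i"
      by (simp only: ms qe)
  qed
qed

lemma qalg_props:
  assumes e: "0 < \<epsilon>"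
  shows "\<And>S. 0 \<le> qalg N A (whatL1 g \<epsilon>) \<eta> ll t S" "(\<Sum>S\<in>paths t. qalg N A (whatL1 g \<epsilon>) \<eta> ll t S) = 1"
proof -
  define v where "v S = whatL1 g \<epsilon> t S * exp (- \<eta> t * Abar N A ll (t - 1) (trunc (t - 1) S))" for S
  have v0: "0 \<le> v S" for S unfolding v_def using what_nonneg[OF e] by simp
  have "\<exists>S\<in>paths t. whatL1 g \<epsilon> t S \<noteq> 0"
  proof (rule ccontr)
    assume "\<not> ?thesis"
    then have "(\<Sum>S\<in>paths t. whatL1 g \<epsilon> t S) = 0" by simp
    then show False using w_sum by simp
  qed
  then obtain S0 where S0: "S0 \<in> paths t" "whatL1 g \<epsilon> t S0 > 0" using what_nonneg[OF e] by (metis less_eq_real_def)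
  have Dpos: "0 < (\<Sum>S\<in>paths t. v S)"
    by (rule sum_pos2[OF paths_fin S0(1)]) (use S0 v0 in \<open>auto simp: v_def\<close>)
  have q: "qalg N A (whatL1 g \<epsilon>) \<eta> ll t S = v S / (\<Sum>S\<in>paths t. v S)" for S
    unfolding qalg_def v_def ..
  show "0 \<le> qalg N A (whatL1 g \<epsilon>) \<eta> ll t S" for S unfolding q using v0 Dpos by simp
  show "(\<Sum>S\<in>paths t. qalg N A (whatL1 g \<epsilon>) \<eta> ll t S) = 1"
    unfolding q using Dpos by (simp add: sum_divide_distrib[symmetric])
qed

lemma palg_dist:
  assumes e: "0 < \<epsilon>" and base: "base_alg_ok N A \<rho>" and vl: "\<forall>t. valid_loss N (ll t)"
  shows "\<And>i. i \<in> {1..N} \<Longrightarrow> 0 \<le> palg N A (whatL1 g \<epsilon>) \<eta> ll t i"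
    "(\<Sum>i=1..N. palg N A (whatL1 g \<epsilon>) \<eta> ll t i) = 1"
proof -
  have d: "is_distrib N (A (map ll xs))" for xs by (rule A_dist[OF base vl])
  show "0 \<le> palg N A (whatL1 g \<epsilon>) \<eta> ll t i" if "i \<in> {1..N}" for i
    unfolding palg_def using qalg_props(1)[OF e] d that
    by (intro sum_nonneg mult_nonneg_nonneg) (auto simp: is_distrib_def)
  have "(\<Sum>i=1..N. palg N A (whatL1 g \<epsilon>) \<eta> ll t i)
      = (\<Sum>S\<in>paths t. qalg N A (whatL1 g \<epsilon>) \<eta> ll t S * (\<Sum>i=1..N. A (map ll [tau t S..<t]) i))"
    unfolding palg_def by (subst sum.swap) (simp add: sum_distrib_left)
  also have "\<dots> = (\<Sum>S\<in>paths t. qalg N A (whatL1 g \<epsilon>) \<eta> ll t S)"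
    using d by (simp add: is_distrib_def)
  also have "\<dots> = 1" by (rule qalg_props(2)[OF e])
  finally show "(\<Sum>i=1..N. palg N A (whatL1 g \<epsilon>) \<eta> ll t i) = 1" .
qed

lemma loss_of_take:
  assumes "s \<le> t"
  shows "loss_of adv hs s = loss_of adv (take (t - 1) hs) s"
  unfolding loss_of_def using assms by (simp add: min_def)

lemma valid_loss_of: "\<forall>h. valid_loss N (adv h) \<Longrightarrow> \<forall>t. valid_loss N (loss_of adv hs t)"
  unfolding loss_of_def by simp

lemma r_n_mono:
  assumes "0 < \<epsilon>" "\<epsilon> < 1" "1 \<le> n" "c1 \<le> c2"
  shows "r_n \<epsilon> n c1 \<le> r_n \<epsilon> n c2"
proof -
  have "0 \<le> ln (real n)" using assms by simp
  moreover have "ln \<epsilon> < 0" using assms by simp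
  ultimately have "0 \<le> (c2 - c1) * (ln (real n) - ln \<epsilon>)" using assms by simp
  then show ?thesis unfolding r_n_def by (simp add: algebra_simps)
qed

theorem corollary1:
  fixes N n g :: nat and \<epsilon> \<delta> :: real and \<rho> :: "real \<Rightarrow> real"
    and A :: "(nat \<Rightarrow> real) list \<Rightarrow> (nat \<Rightarrow> real)"
    and \<eta> :: "nat \<Rightarrow> real" and adv :: "nat list \<Rightarrow> nat \<Rightarrow> real"
    and S :: "nat set" and a :: "nat \<Rightarrow> nat"
  assumes "N \<ge> 1" and "n \<ge> 1" and "g \<ge> 1"
    and "0 < \<epsilon>" and "\<epsilon> < 1" and "0 < \<delta>" and "\<delta> < 1"
    and "\<forall>h. valid_loss N (adv h)"
    and "rho_ok \<rho>" and "base_alg_ok N A \<rho>"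
    and "\<forall>t. 0 < \<eta> t" and "\<forall>t\<ge>1. \<eta> (t + 1) \<le> \<eta> t"
    and "S \<in> paths n" and "\<forall>c\<le>card S. a c \<in> {1..N}"
  shows "alg_prob N A (whatL1 g \<epsilon>) \<eta> adv n
           (\<lambda>hs. Lhat adv n hs - meta_loss (loss_of adv hs) n S a \<le>
              L_Cn g (card S) n * (card S + 1) * \<rho> (n / (L_Cn g (card S) n * (card S + 1)))
              + (\<Sum>t=1..n. \<eta> t / 8)
              + r_n \<epsilon> n (L_Cn g (card S) n * (card S + 1) - 1) / \<eta> n
              + sqrt (n / 2 * ln (1 / \<delta>)))
         \<ge> 1 - \<delta>"
proof -
  note N1 = assms(1) and n1 = assms(2) and g1 = assms(3) and e0 = assms(4) and e1 = assms(5)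
    and d0 = assms(6) and d1 = assms(7) and advv = assms(8) and rho = assms(9) and base = assms(10)
    and ep = assms(11) and ed = assms(12) and Sp = assms(13) and aS = assms(14)
  define k where "k = nat \<lfloor>log 2 (real g + 1)\<rfloor>"
  note kf = k_facts[OF g1 k_def]
  have S: "S \<subseteq> {2..n}" using Sp by (simp add: paths_def)
  define T where "T = Tref k n S"
  have Tsub: "T \<subseteq> {2..n}" "S \<subseteq> T" "finite T" using Tref_sub[OF S] unfolding T_def by auto
  have Tp: "T \<in> paths n" using Tsub by (simp add: paths_def)
  have hp: "\<forall>s\<in>{2..n}. s \<notin> T \<longrightarrow> hprune g s (tau (s - 1) T) = 1"
    using no_forced[OF S kf(1) kf(3)] unfolding T_def by blast
  note wl = what_lower[OF e0 n1 Tsub(1) hp]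
  define X where "X = L_Cn g (card S) n * (real (card S) + 1)"
  have cardT: "real (card T) + 1 \<le> X" unfolding X_def T_def by (rule Tref_card[OF S n1 g1 k_def])
  define Dd where "Dd = X * \<rho> (real n / X) + (\<Sum>t=1..n. \<eta> t / 8) + r_n \<epsilon> n (X - 1) / \<eta> n"
  have det: "(\<Sum>t=1..n. ebar N (palg N A (whatL1 g \<epsilon>) \<eta> (loss_of adv hs) t) (loss_of adv hs t))
      - meta_loss (loss_of adv hs) n S a \<le> Dd" for hs
  proof -
    define ll where "ll = loss_of adv hs"
    have vl: "\<forall>t. valid_loss N (ll t)" unfolding ll_def by (rule valid_loss_of[OF advv])
    have ew: "(\<Sum>t=1..n. ebar N (palg N A (whatL1 g \<epsilon>) \<eta> ll t) (ll t))
       \<le> Abar N A ll n T + ln (1 / whatL1 g \<epsilon> n T) / \<eta> n + (\<Sum>t=1..n. \<eta> t / 8)"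
      by (rule ew_bound[OF e0 base vl ep ed n1 Tp wl(1)])
    have sl: "Abar N A ll n T - meta_loss ll n S a \<le> (real (card T) + 1) * \<rho> (real n / (real (card T) + 1))"
      by (rule seg_loss[OF n1 Tsub(1,2) aS base vl rho])
    have rs: "(real (card T) + 1) * \<rho> (real n / (real (card T) + 1)) \<le> X * \<rho> (real n / X)"
      by (rule rho_scale) (use rho cardT in \<open>auto simp: rho_ok_def\<close>)
    have rn: "ln (1 / whatL1 g \<epsilon> n T) / \<eta> n \<le> r_n \<epsilon> n (X - 1) / \<eta> n"
    proof -
      have "ln (1 / whatL1 g \<epsilon> n T) \<le> r_n \<epsilon> n (X - 1)"
        using wl(2) r_n_mono[OF e0 e1 n1, of "real (card T)" "X - 1"] cardT by simp
      moreover have "0 \<le> \<eta> n" using ep less_imp_le by blast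
      ultimately show ?thesis by (rule divide_right_mono)
    qed
    show ?thesis using ew sl rs rn unfolding ll_def Dd_def by linarith
  qed
  define P where "P h i = palg N A (whatL1 g \<epsilon>) \<eta> (loss_of adv h) (Suc (length h)) i" for h i
  define Xf where "Xf h i = (if i \<in> {1..N} then adv h i else 0)" for h i
  interpret H: histP N P Xf
  proof
    fix h i assume "i \<in> {1..N}"
    then show "0 \<le> P h i" unfolding P_def by (rule palg_dist(1)[OF e0 base valid_loss_of[OF advv]])
  next
    fix h show "(\<Sum>i=1..N. P h i) = 1" unfolding P_def by (rule palg_dist(2)[OF e0 base valid_loss_of[OF advv]])
  next
    fix h i show "0 \<le> Xf h i \<and> Xf h i \<le> 1" unfolding Xf_def using advv by (auto simp: valid_loss_def)
  qed
  have Pt: "P (take (t - 1) hs) = palg N A (whatL1 g \<epsilon>) \<eta> (loss_of adv hs) t"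
    if "hs \<in> Hs N n" "t \<in> {1..n}" for hs t
  proof -
    have l: "Suc (length (take (t - 1) hs)) = t" using that by (auto simp: Hs_def)
    have "P (take (t - 1) hs) = palg N A (whatL1 g \<epsilon>) \<eta> (loss_of adv (take (t - 1) hs)) t"
      unfolding P_def l by (rule ext) simp
    also have "\<dots> = palg N A (whatL1 g \<epsilon>) \<eta> (loss_of adv hs) t"
    proof (rule palg_cong)
      fix s assume "1 \<le> s" "s < t"
      then show "loss_of adv (take (t - 1) hs) s = loss_of adv hs s" using loss_of_take[of s t adv hs] by simp
    qed
    finally show ?thesis .
  qed
  have Q: "Qp P hs = (\<Prod>t=1..n. palg N A (whatL1 g \<epsilon>) \<eta> (loss_of adv hs) t (hs ! (t - 1)))"
    if hs: "hs \<in> Hs N n" for hs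
  proof -
    have len: "length hs = n" using hs by (simp add: Hs_def)
    show ?thesis unfolding Qp_def len
    proof (intro prod.cong refl)
      fix t assume t: "t \<in> {1..n}"
      show "P (take (t - 1) hs) (hs ! (t - 1)) = palg N A (whatL1 g \<epsilon>) \<eta> (loss_of adv hs) t (hs ! (t - 1))"
        using Pt[OF hs t] by (rule fun_cong)
    qed
  qed
  have Y: "Yp N P Xf hs = Lhat adv n hs - (\<Sum>t=1..n. ebar N (palg N A (whatL1 g \<epsilon>) \<eta> (loss_of adv hs) t) (loss_of adv hs t))"
    if hs: "hs \<in> Hs N n" for hs
  proof -
    have len: "length hs = n" using hs by (simp add: Hs_def)
    have "Yp N P Xf hs = (\<Sum>t=1..n. loss_of adv hs t (hs ! (t - 1))
        - ebar N (palg N A (whatL1 g \<epsilon>) \<eta> (loss_of adv hs) t) (loss_of adv hs t))"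
      unfolding Yp_def len
    proof (intro sum.cong refl)
      fix t assume t: "t \<in> {1..n}"
      have "hs ! (t - 1) \<in> set hs" using hs t by (auto simp: Hs_def)
      then have mem: "hs ! (t - 1) \<in> {1..N}" using hs by (auto simp: Hs_def)
      have x1: "Xf (take (t - 1) hs) (hs ! (t - 1)) = loss_of adv hs t (hs ! (t - 1))"
        unfolding Xf_def loss_of_def using mem by simp
      have x2: "(\<Sum>i=1..N. P (take (t - 1) hs) i * Xf (take (t - 1) hs) i)
          = ebar N (palg N A (whatL1 g \<epsilon>) \<eta> (loss_of adv hs) t) (loss_of adv hs t)"
        unfolding ebar_def Pt[OF hs t] Xf_def loss_of_def by (intro sum.cong refl) simp
      show "Xf (take (t - 1) hs) (hs ! (t - 1)) - (\<Sum>i=1..N. P (take (t - 1) hs) i * Xf (take (t - 1) hs) i)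
          = loss_of adv hs t (hs ! (t - 1)) - ebar N (palg N A (whatL1 g \<epsilon>) \<eta> (loss_of adv hs) t) (loss_of adv hs t)"
        unfolding x1 x2 ..
    qed
    then show ?thesis unfolding Lhat_def by (simp add: sum_subtractf)
  qed
  have key: "alg_prob N A (whatL1 g \<epsilon>) \<eta> adv n E \<ge> 1 - \<delta>"
    if hE: "\<And>hs. hs \<in> Hs N n \<Longrightarrow> \<not> E hs \<Longrightarrow> sqrt (n / 2 * ln (1 / \<delta>)) < Yp N P Xf hs" for E
  proof -
    have "1 - \<delta> \<le> (\<Sum>hs\<in>{hs\<in>Hs N n. E hs}. Qp P hs)" by (rule H.tail_bound[OF d0 d1 n1 hE])
    also have "\<dots> = alg_prob N A (whatL1 g \<epsilon>) \<eta> adv n E"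
    proof -
      have se: "{hs. length hs = n \<and> set hs \<subseteq> {1..N} \<and> E hs} = {hs\<in>Hs N n. E hs}" by (auto simp: Hs_def)
      show ?thesis unfolding alg_prob_def se by (intro sum.cong refl) (simp add: Q)
    qed
    finally show ?thesis .
  qed
  show ?thesis
  proof (rule key)
    fix hs assume hs: "hs \<in> Hs N n"
      and nE: "\<not> (Lhat adv n hs - meta_loss (loss_of adv hs) n S a \<le>
              L_Cn g (card S) n * (card S + 1) * \<rho> (n / (L_Cn g (card S) n * (card S + 1)))
              + (\<Sum>t=1..n. \<eta> t / 8)
              + r_n \<epsilon> n (L_Cn g (card S) n * (card S + 1) - 1) / \<eta> n
              + sqrt (n / 2 * ln (1 / \<delta>)))"
    have gt: "Dd + sqrt (n / 2 * ln (1 / \<delta>)) < Lhat adv n hs - meta_loss (loss_of adv hs) n S a"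
    proof -
      have c: "real (card S) + 1 = 1 + real (card S)" by simp
      show ?thesis using nE unfolding Dd_def X_def c by (simp add: not_le)
    qed
    show "sqrt (n / 2 * ln (1 / \<delta>)) < Yp N P Xf hs"
      using gt det[of hs] Y[OF hs] by linarith
  qed
qed

end
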